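(* Let $n=2^{s}$ and $q=2^{r}$ with $s,r$ positive integers. Then for every positive integer $h$, \[ q^{\binom{n}{2}h}MK_{n-1}^{h}=\sum_{i=0}^{h-1}(-1)^{h+i+1}\binom{h}{i}N^{h-i}q^{\binom{n}{2}i}MK_{n-1}^{i} +q\sum_{i=0}^{\min\{N,h\}}(-1)^{h+i}C_{i}\sum_{t=i}^{h}t!\,S(h,t)\,2^{h-t}\binom{N-i}{N-t}, \] where $N=q^{\binom{n}{2}}\prod_{j=2}^{n}(q^{j}-1)$ is the order of $SL(n,q)$, $S(h,t)=\frac{1}{t!}\sum_{j=0}^{t}(-1)^{t-j}\binom{t}{j}j^{h}$ is the Stirling number of the second kind, and $\{C_i\}_{i=0}^{N}$ is the weight distribution of the code $C=C(SL(n,q))$. Moreover, for $0\le i\le N$, \[ C_{i}=\sum\prod_{\beta\in\mathbb{F}_{q}}\binom{n_{\beta}}{\nu_{\beta}}, \] where the sum runs over all families of nonnegative integers $\{\nu_\beta\}_{\beta\in\mathbb{F}_q}$ with $\sum_{\beta}\nu_\beta=i$ and $\sum_{\beta}\nu_\beta\beta=0$ (an identity in $\mathbb{F}_q$), and \[ n_\beta=|\{g\in SL(n,q): Tr(g)=\beta\}|=q^{\binom{n}{2}-1}\Big\{\prod_{j=2}^{n}(q^{j}-1)+1+q\,\theta(\beta)\Big\},\qquad \theta(\beta)=\begin{cases}K_{n-2}(\lambda;\beta^{-1}),&\beta\neq0,\\ 0,&\beta=0.\end{cases} \]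
   Context: $\mathbb{F}_q$ is the finite field with $q$ elements, $tr(x)=x+x^2+\cdots+x^{2^{r-1}}$ is the absolute trace $\mathbb{F}_q\to\mathbb{F}_2$, and $\lambda(x)=(-1)^{tr(x)}$ is the canonical additive character. For a positive integer $m$ and $a\in\mathbb{F}_q^*$, the $m$-dimensional Kloosterman sum is $K_m(\lambda;a)=\sum_{\alpha_1,\dots,\alpha_m\in\mathbb{F}_q^*}\lambda(\alpha_1+\cdots+\alpha_m+a\alpha_1^{-1}\cdots\alpha_m^{-1})$; by convention $K_0(\lambda;a)=\lambda(a)$. The $h$-th moment is $MK_m^{h}=\sum_{a\in\mathbb{F}_q^*}K_m(\lambda;a)^h$ (so $MK_m^0=q-1$). $Tr(g)$ denotes the matrix trace. Fix an ordering $g_1,\dots,g_N$ of $SL(n,q)$ and let $v=(Tr(g_1),\dots,Tr(g_N))\in\mathbb{F}_q^N$; the binary code is $C(SL(n,q))=\{u\in\mathbb{F}_2^N: u\cdot v=0\}$ (dot product computed in $\mathbb{F}_q$). $C_i$ is the number of codewords of Hamming weight $i$ in this code. Convention: $\binom{b}{a}=0$ if $b<a$. *)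

theory Defs
  imports "HOL-Analysis.Analysis" "HOL-Combinatorics.Stirling"
begin

text \<open>Absolute trace F_q -> F_2 (viewed inside F_q), where q = 2^r.\<close>
definition abs_tr :: "nat \<Rightarrow> 'a::field \<Rightarrow> 'a" where
  "abs_tr r x = (\<Sum>i<r. x ^ (2 ^ i))"

text \<open>Canonical additive character lambda(x) = (-1)^(tr x); tr x is 0 or 1 in F_2.\<close>
definition add_char :: "nat \<Rightarrow> 'a::field \<Rightarrow> int" where
  "add_char r x = (if abs_tr r x = 0 then 1 else -1)"

definition kloosterman :: "nat \<Rightarrow> nat \<Rightarrow> 'a::{field,finite} \<Rightarrow> int" where
  "kloosterman r m a =
     (\<Sum>\<alpha>\<in>PiE {..<m} (\<lambda>_. UNIV - {0}).
        add_char r ((\<Sum>i<m. \<alpha> i) + a * inverse (\<Prod>i<m. \<alpha> i)))"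

definition MK :: "nat \<Rightarrow> 'a::{field,finite} itself \<Rightarrow> nat \<Rightarrow> nat \<Rightarrow> int" where
  "MK r _ m h = (\<Sum>a\<in>(UNIV::'a set) - {0}. kloosterman r m a ^ h)"

definition SL :: "('a::field ^'n::finite^'n) set" where
  "SL = {A. det A = 1}"

text \<open>The binary code C(SL(n,q)): binary vectors indexed by the elements of SL(n,q)
  (entries in {0,1}, zero outside SL), orthogonal to the vector of traces, dot product in F_q.\<close>
definition SL_code :: "(('a::{field,finite}^'n::finite^'n) \<Rightarrow> nat) set" where
  "SL_code = {u. (\<forall>g. u g \<in> {0,1}) \<and> (\<forall>g. g \<notin> SL \<longrightarrow> u g = 0) \<and>
                 (\<Sum>g\<in>SL. of_nat (u g) * trace g) = (0::'a)}"

definition hweight :: "(('a::{field,finite}^'n::finite^'n) \<Rightarrow> nat) \<Rightarrow> nat" where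
  "hweight u = card {g\<in>SL. u g \<noteq> 0}"

definition weight_dist :: "('a::{field,finite}^'n::finite^'n) itself \<Rightarrow> nat \<Rightarrow> nat" where
  "weight_dist _ i = card {u \<in> (SL_code :: (('a^'n^'n) \<Rightarrow> nat) set). hweight u = i}"

definition theta :: "nat \<Rightarrow> nat \<Rightarrow> 'a::{field,finite} \<Rightarrow> int" where
  "theta r n \<beta> = (if \<beta> = 0 then 0 else kloosterman r (n - 2) (inverse \<beta>))"

end

theory Submission
  imports Defs "HOL-Computational_Algebra.Polynomial"
begin

context
  fixes r :: nat
  assumes card2: "CARD('a::{field,finite}) = 2^r" and rpos: "r > 0"
begin

lemma two_eq_0: "(2::'a) = 0"
proof -
  have bij: "bij_betw (\<lambda>x. x + 1) UNIV (UNIV::'a set)"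
    by (auto simp: bij_betw_def inj_on_def intro!: image_eqI[where x="y - 1" for y])
  have "(\<Sum>x\<in>UNIV. x + 1) = (\<Sum>x\<in>(UNIV::'a set). x)"
    using sum.reindex_bij_betw[OF bij, of "\<lambda>x. x"] by simp
  hence "of_nat (CARD('a)) = (0::'a)" by (simp add: sum.distrib)
  hence "(2::'a)^r = 0" using card2 by simp
  thus ?thesis by simp
qed

lemma add_self: "(x::'a) + x = 0"
  using two_eq_0 by (metis mult_2 mult_zero_left)

lemma minus_self: "- (x::'a) = x"
  using add_self by (metis add_eq_0_iff)

lemma sq_add: "((x::'a) + y)^2 = x^2 + y^2"
proof -
  have "(x+y)^2 = x^2 + y^2 + 2*x*y" by (simp add: power2_sum)
  thus ?thesis using two_eq_0 by simp
qed

lemma pow2_add: "((x::'a) + y)^(2^i) = x^(2^i) + y^(2^i)"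
proof (induction i)
  case 0 then show ?case by simp
next
  case (Suc i)
  have "(x+y)^(2^Suc i) = ((x+y)^(2^i))^2" by (simp add: power_mult[symmetric] mult.commute)
  also have "\<dots> = (x^(2^i))^2 + (y^(2^i))^2" using Suc sq_add by simp
  also have "\<dots> = x^(2^Suc i) + y^(2^Suc i)" by (simp add: power_mult[symmetric] mult.commute)
  finally show ?case .
qed

lemma pow2_sum: "finite A \<Longrightarrow> (\<Sum>j\<in>A. f j :: 'a)^(2^i) = (\<Sum>j\<in>A. (f j)^(2^i))"
  by (induction A rule: finite_induct) (simp_all add: pow2_add)

lemma fermat_nz:
  assumes "(x::'a) \<noteq> 0" shows "x^(2^r - 1) = 1"
proof -
  let ?U = "UNIV - {0::'a}"
  have bij: "bij_betw (\<lambda>y. x*y) ?U ?U"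
    using assms by (auto simp: bij_betw_def inj_on_def intro!: image_eqI[where x="y / x" for y])
  have "(\<Prod>y\<in>?U. x*y) = (\<Prod>y\<in>?U. y)" using prod.reindex_bij_betw[OF bij, of "\<lambda>y. y"] by simp
  moreover have "(\<Prod>y\<in>?U. x*y) = x^card ?U * (\<Prod>y\<in>?U. y)" by (simp add: prod.distrib)
  moreover have "(\<Prod>y\<in>?U. y) \<noteq> 0" by simp
  moreover have "card ?U = 2^r - 1" using card2 by (simp add: card_Diff_subset)
  ultimately show ?thesis by (metis mult_cancel_right2)
qed

lemma fermat: "(x::'a)^(2^r) = x"
proof (cases "x = 0")
  case True then show ?thesis by simp
next
  case False
  have "(2::nat)^r = Suc (2^r - 1)" by simp
  hence "x^(2^r) = x * x^(2^r - 1)" by (metis power_Suc)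
  thus ?thesis using fermat_nz[OF False] by simp
qed

lemma tr_sq_arg: "abs_tr r ((x::'a)^2) = (abs_tr r x)^2"
proof -
  have "(abs_tr r x)^2 = (abs_tr r x)^(2^1)" by simp
  also have "\<dots> = (\<Sum>i<r. (x^(2^i))^(2^1))" unfolding abs_tr_def by (rule pow2_sum) simp
  also have "\<dots> = (\<Sum>i<r. (x^2)^(2^i))"
    by (intro sum.cong refl) (simp add: power_mult[symmetric] mult.commute)
  finally show ?thesis by (simp add: abs_tr_def)
qed

lemma tr_idem: "(abs_tr r (x::'a))^2 = abs_tr r x"
proof -
  obtain r' where r': "r = Suc r'" using rpos by (cases r) auto
  have "(abs_tr r x)^2 = (\<Sum>i<r. (x^2)^(2^i))" using tr_sq_arg by (simp add: abs_tr_def)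
  also have "\<dots> = (\<Sum>i<r. x^(2^(Suc i)))"
    by (intro sum.cong refl) (simp add: power_mult[symmetric] mult.commute)
  also have "\<dots> = (\<Sum>i<r'. x^(2^(Suc i))) + x^(2^r)" unfolding r' by (rule sum.lessThan_Suc)
  also have "\<dots> = (\<Sum>i<r'. x^(2^(Suc i))) + x" by (simp only: fermat)
  also have "abs_tr r x = x^(2^0) + (\<Sum>i<r'. x^(2^(Suc i)))" unfolding abs_tr_def r' by (rule sum.lessThan_Suc_shift)
  ultimately show ?thesis by simp
qed

lemma tr_01: "abs_tr r (x::'a) = 0 \<or> abs_tr r x = 1"
proof -
  have "abs_tr r x * (abs_tr r x - 1) = 0" using tr_idem[of x] by (simp add: algebra_simps power2_eq_square)
  thus ?thesis by auto
qed

lemma tr_add: "abs_tr r ((x::'a) + y) = abs_tr r x + abs_tr r y"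
  unfolding abs_tr_def by (simp add: pow2_add sum.distrib)

lemma lam_add: "add_char r ((x::'a) + y) = add_char r x * add_char r y"
proof -
  have "(1::'a) + 1 = 0" by (rule add_self)
  thus ?thesis using tr_01[of x] tr_01[of y] by (auto simp: add_char_def tr_add)
qed

lemma lam_sq: "add_char r ((x::'a)^2) = add_char r x"
  unfolding add_char_def tr_sq_arg by simp

lemma lam_0[simp]: "add_char r (0::'a) = 1"
  unfolding add_char_def abs_tr_def by (auto intro!: sum.neutral)

lemma lam_minus: "add_char r (-(x::'a)) = add_char r x"
  by (metis minus_self)

lemma lam_sqr1: "add_char r (x::'a) * add_char r x = 1"
  by (simp add: add_char_def)

lemma lam_pm: "add_char r (x::'a) = 1 \<or> add_char r x = -1"
  by (simp add: add_char_def)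

lemma lam_nontriv: "\<exists>t::'a. add_char r t = -1"
proof -
  define p :: "'a poly" where "p = (\<Sum>i<r. Polynomial.monom 1 (2^i))"
  have polyp: "poly p x = abs_tr r x" for x
    by (simp add: p_def abs_tr_def poly_sum poly_monom)
  obtain r' where r': "r = Suc r'" using rpos by (cases r) auto
  have "coeff p (2^r') = (\<Sum>i<r. if 2^i = (2::nat)^r' then 1 else 0)"
    by (simp add: p_def coeff_sum coeff_monom)
  also have "\<dots> = (\<Sum>i\<in>{r'}. 1)" using r' by (intro sum.mono_neutral_cong_right) auto
  finally have "coeff p (2^r') = 1" by simp
  hence pnz: "p \<noteq> 0" by auto
  have "degree p \<le> 2^r'" unfolding p_def
    by (rule degree_sum_le) (auto simp: degree_monom_eq r')
  hence "card {x. poly p x = 0} \<le> 2^r'" using card_poly_roots_bound[OF pnz] by linarith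
  also have "\<dots> < CARD('a)" using card2 r' by simp
  finally have "{x. poly p x = 0} \<noteq> UNIV" by auto
  then obtain t where "poly p t \<noteq> 0" by auto
  hence "abs_tr r t \<noteq> 0" using polyp by simp
  thus ?thesis by (auto simp: add_char_def)
qed

lemma lam_sum0: "(\<Sum>x\<in>UNIV. add_char r (x::'a)) = 0"
proof -
  obtain t::'a where t: "add_char r t = -1" using lam_nontriv by blast
  have bij: "bij_betw (\<lambda>x. x + t) UNIV UNIV"
    by (auto simp: bij_betw_def inj_on_def intro!: image_eqI[where x="y - t" for y])
  have "(\<Sum>x\<in>UNIV. add_char r (x::'a)) = (\<Sum>x\<in>UNIV. add_char r (x + t))"
    using sum.reindex_bij_betw[OF bij, of "add_char r"] by simp
  also have "\<dots> = - (\<Sum>x\<in>UNIV. add_char r (x::'a))" by (simp add: lam_add t sum_negf)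
  finally show ?thesis by simp
qed

lemma lam_orth: "(\<Sum>a\<in>UNIV. add_char r (a * (y::'a))) = (if y = 0 then int (2^r) else 0)"
proof (cases "y = 0")
  case True then show ?thesis using card2 by simp
next
  case False
  have bij: "bij_betw (\<lambda>x. x * y) UNIV UNIV"
    using False by (auto simp: bij_betw_def inj_on_def intro!: image_eqI[where x="z / y" for z])
  have "(\<Sum>a\<in>UNIV. add_char r (a * y)) = (\<Sum>x\<in>UNIV. add_char r (x::'a))"
    using sum.reindex_bij_betw[OF bij, of "add_char r"] by simp
  then show ?thesis using False lam_sum0 by simp
qed

lemma lam_orth_nz: "(\<Sum>a\<in>UNIV-{0}. add_char r (a * (y::'a))) = (if y = 0 then int (2^r) - 1 else -1)"
proof -
  have "(\<Sum>a\<in>UNIV. add_char r (a * (y::'a))) = add_char r (0 * y) + (\<Sum>a\<in>UNIV-{0}. add_char r (a * (y::'a)))"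
    by (subst sum.remove[of _ 0]) auto
  thus ?thesis using lam_orth[of y] by auto
qed

lemma sq_inj: "inj (\<lambda>x::'a. x^2)"
proof (rule injI)
  fix x y :: 'a assume "x^2 = y^2"
  hence "(x + y)^2 = 0" using sq_add add_self by simp
  hence "x + y = 0" by simp
  thus "x = y" using minus_self by (metis add_eq_0_iff)
qed

lemma pow2s_inj: "inj (\<lambda>x::'a. x^(2^s))"
proof (induction s)
  case 0 then show ?case by simp
next
  case (Suc s)
  have "(\<lambda>x::'a. x^(2^Suc s)) = (\<lambda>x. x^2) \<circ> (\<lambda>x. x^(2^s))"
    by (auto simp: power_mult[symmetric] mult.commute)
  thus ?case using Suc sq_inj by (simp add: inj_compose)
qed

lemma pow2s_bij: "bij (\<lambda>x::'a. x^(2^s))"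
  using pow2s_inj finite_UNIV_inj_surj[of "\<lambda>x::'a. x^(2^s)"] by (auto simp: bij_def)

lemma pow2s_bij_nz: "bij_betw (\<lambda>x::'a. x^(2^s)) (UNIV - {0}) (UNIV - {0})"
proof -
  have "(\<lambda>x::'a. x^(2^s)) ` (UNIV - {0}) = UNIV - {0}"
  proof -
    have "(\<lambda>x::'a. x^(2^s)) ` UNIV = UNIV" using pow2s_bij by (simp add: bij_def)
    moreover have z: "(0::'a)^(2^s) = 0" by (simp add: power_0_left)
    ultimately show ?thesis using pow2s_inj[of s] image_set_diff[of "\<lambda>x::'a. x^(2^s)" UNIV "{0}"] by (simp only: z image_insert image_empty)
  qed
  thus ?thesis using pow2s_inj by (auto simp: bij_betw_def intro: inj_on_subset)
qed

lemma lam_pow2s: "add_char r ((x::'a)^(2^s)) = add_char r x"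
proof (induction s)
  case 0 then show ?case by simp
next
  case (Suc s)
  have "x^(2^Suc s) = (x^(2^s))^2" by (simp add: power_mult[symmetric] mult.commute)
  thus ?case using Suc lam_sq by simp
qed


lemma K_0: "kloosterman r 0 (a::'a) = add_char r a"
  by (simp add: kloosterman_def)

lemma K_Suc: "kloosterman r (Suc m) (d::'a) =
   (\<Sum>e\<in>UNIV-{0}. add_char r (d * inverse e) * kloosterman r m e)"
proof -
  let ?F = "UNIV - {0::'a}"
  let ?P = "PiE {..<m} (\<lambda>_. ?F)"
  let ?f = "\<lambda>\<alpha>. add_char r ((\<Sum>i<Suc m. \<alpha> i) + d * inverse (\<Prod>i<Suc m. \<alpha> i))"
  have eq: "PiE {..<Suc m} (\<lambda>_. ?F) = (\<lambda>(y, g). g(m := y)) ` (?F \<times> ?P)"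
    unfolding lessThan_Suc by (rule PiE_insert_eq)
  have inj: "inj_on (\<lambda>(y, g). g(m := y)) (?F \<times> ?P)"
    by (rule inj_combinator) simp
  have "kloosterman r (Suc m) d = (\<Sum>(y,g)\<in>?F \<times> ?P. ?f (g(m := y)))"
    unfolding kloosterman_def eq by (subst sum.reindex[OF inj]) (simp add: case_prod_unfold)
  also have "\<dots> = (\<Sum>y\<in>?F. \<Sum>g\<in>?P. ?f (g(m := y)))"
    by (rule sum.cartesian_product[symmetric])
  also have "\<dots> = (\<Sum>g\<in>?P. \<Sum>y\<in>?F. ?f (g(m := y)))" by (rule sum.swap)
  also have "\<dots> = (\<Sum>g\<in>?P. \<Sum>e\<in>?F. add_char r (d * inverse e) *
                     add_char r ((\<Sum>i<m. g i) + e * inverse (\<Prod>i<m. g i)))"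
  proof (rule sum.cong[OF refl])
    fix g assume g: "g \<in> ?P"
    define S where "S = (\<Sum>i<m. g i)"
    define Q where "Q = (\<Prod>i<m. g i)"
    have Qnz: "Q \<noteq> 0" using g by (auto simp: Q_def PiE_iff)
    have 1: "?f (g(m := y)) = add_char r (S + y + d * inverse (Q * y))" for y
    proof -
      have e1: "(\<Sum>i<Suc m. (g(m := y)) i) = S + y" unfolding S_def by (simp add: sum.lessThan_Suc)
      have e2: "(\<Prod>i<Suc m. (g(m := y)) i) = Q * y" unfolding Q_def by (simp add: prod.lessThan_Suc)
      show ?thesis by (simp only: e1 e2)
    qed
    have bij: "bij_betw (\<lambda>e. e * inverse Q) ?F ?F"
      using Qnz by (auto simp: bij_betw_def inj_on_def intro!: image_eqI[where x="z * Q" for z] simp: field_simps)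
    have "(\<Sum>y\<in>?F. ?f (g(m := y))) = (\<Sum>y\<in>?F. add_char r (S + y + d * inverse (Q * y)))"
      using 1 by simp
    also have "\<dots> = (\<Sum>e\<in>?F. add_char r (S + e * inverse Q + d * inverse (Q * (e * inverse Q))))"
      using sum.reindex_bij_betw[OF bij, of "\<lambda>y. add_char r (S + y + d * inverse (Q * y))"] by simp
    also have "\<dots> = (\<Sum>e\<in>?F. add_char r (d * inverse e) * add_char r (S + e * inverse Q))"
    proof (rule sum.cong[OF refl])
      fix e assume e: "e \<in> ?F"
      have "Q * (e * inverse Q) = e" using Qnz by simp
      hence "S + e * inverse Q + d * inverse (Q * (e * inverse Q)) = d * inverse e + (S + e * inverse Q)"
        by (simp add: algebra_simps)
      thus "add_char r (S + e * inverse Q + d * inverse (Q * (e * inverse Q))) =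
            add_char r (d * inverse e) * add_char r (S + e * inverse Q)" by (metis lam_add)
    qed
    finally show "(\<Sum>y\<in>?F. ?f (g(m := y))) = (\<Sum>e\<in>?F. add_char r (d * inverse e) *
                     add_char r ((\<Sum>i<m. g i) + e * inverse (\<Prod>i<m. g i)))"
      unfolding S_def Q_def .
  qed
  also have "\<dots> = (\<Sum>e\<in>?F. \<Sum>g\<in>?P. add_char r (d * inverse e) *
                     add_char r ((\<Sum>i<m. g i) + e * inverse (\<Prod>i<m. g i)))" by (rule sum.swap)
  also have "\<dots> = (\<Sum>e\<in>?F. add_char r (d * inverse e) * kloosterman r m e)"
    by (simp add: kloosterman_def sum_distrib_left)
  finally show ?thesis .
qed

lemma K_sq: "kloosterman r m ((a::'a)^2) = kloosterman r m a"
proof -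
  let ?F = "UNIV - {0::'a}"
  let ?P = "PiE {..<m} (\<lambda>_. ?F)"
  let ?h = "\<lambda>\<alpha>. restrict (\<lambda>i. (\<alpha> i)^2) {..<m}"
  have fin: "finite ?P" by (rule finite_PiE) auto
  have sub: "?h ` ?P \<subseteq> ?P"
  proof (rule image_subsetI)
    fix \<alpha> assume a: "\<alpha> \<in> ?P"
    have "\<forall>i\<in>{..<m}. \<alpha> i \<noteq> 0" using a by (simp add: PiE_iff)
    hence "\<forall>i\<in>{..<m}. ?h \<alpha> i \<in> ?F" by simp
    moreover have "?h \<alpha> \<in> extensional {..<m}" by (rule restrict_extensional)
    ultimately show "?h \<alpha> \<in> ?P" by (simp only: PiE_iff)
  qed
  have inj: "inj_on ?h ?P"
  proof (rule inj_onI)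
    fix \<alpha> \<beta> assume a: "\<alpha> \<in> ?P" and b: "\<beta> \<in> ?P" and e: "?h \<alpha> = ?h \<beta>"
    show "\<alpha> = \<beta>"
    proof
      fix i show "\<alpha> i = \<beta> i"
      proof (cases "i < m")
        case True
        hence "(\<alpha> i)^2 = (\<beta> i)^2" using fun_cong[OF e, of i] by simp
        thus ?thesis using sq_inj by (auto dest: injD)
      next
        case False thus ?thesis using a b by (auto simp: PiE_iff extensional_def)
      qed
    qed
  qed
  have bij: "bij_betw ?h ?P ?P" using endo_inj_surj[OF fin sub inj] inj by (simp add: bij_betw_def)
  have "kloosterman r m a = (\<Sum>\<alpha>\<in>?P. add_char r ((\<Sum>i<m. \<alpha> i) + a * inverse (\<Prod>i<m. \<alpha> i)))"
    by (simp add: kloosterman_def)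
  also have "\<dots> = (\<Sum>\<alpha>\<in>?P. add_char r ((\<Sum>i<m. (\<alpha> i)^2) + a^2 * inverse (\<Prod>i<m. (\<alpha> i)^2)))"
  proof (rule sum.cong[OF refl])
    fix \<alpha> assume "\<alpha> \<in> ?P"
    have "((\<Sum>i<m. \<alpha> i) + a * inverse (\<Prod>i<m. \<alpha> i))^2 =
          (\<Sum>i<m. (\<alpha> i)^2) + a^2 * inverse (\<Prod>i<m. (\<alpha> i)^2)"
    proof -
      have s1: "(\<Sum>i<m. \<alpha> i)^2 = (\<Sum>i<m. (\<alpha> i)^2)" using pow2_sum[of "{..<m}" \<alpha> 1] by simp
      have s2: "(a * inverse (\<Prod>i<m. \<alpha> i))^2 = a^2 * inverse (\<Prod>i<m. (\<alpha> i)^2)"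
        by (simp only: power_mult_distrib power_inverse prod_power_distrib)
      show ?thesis by (simp only: sq_add s1 s2)
    qed
    note eq = this
    show "add_char r ((\<Sum>i<m. \<alpha> i) + a * inverse (\<Prod>i<m. \<alpha> i)) =
          add_char r ((\<Sum>i<m. (\<alpha> i)^2) + a^2 * inverse (\<Prod>i<m. (\<alpha> i)^2))"
      using lam_sq[of "(\<Sum>i<m. \<alpha> i) + a * inverse (\<Prod>i<m. \<alpha> i)"] unfolding eq by (rule sym)
  qed
  also have "\<dots> = (\<Sum>\<alpha>\<in>?P. add_char r ((\<Sum>i<m. ?h \<alpha> i) + a^2 * inverse (\<Prod>i<m. ?h \<alpha> i)))"
    by (intro sum.cong refl) simp
  also have "\<dots> = kloosterman r m (a^2)"
    unfolding kloosterman_def using sum.reindex_bij_betw[OF bij, of "\<lambda>\<alpha>. add_char r ((\<Sum>i<m. \<alpha> i) + a^2 * inverse (\<Prod>i<m. \<alpha> i))"]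
    by simp
  finally show ?thesis ..
qed

lemma K_pow2s: "kloosterman r m ((a::'a)^(2^s)) = kloosterman r m a"
proof (induction s)
  case 0 then show ?case by simp
next
  case (Suc s)
  have "a^(2^Suc s) = (a^(2^s))^2" by (simp add: power_mult[symmetric] mult.commute)
  thus ?case using Suc K_sq by simp
qed

lemma K_total: "(\<Sum>e\<in>UNIV-{0}. kloosterman r j (e::'a)) = (-1)^(Suc j)"
proof (induction j)
  case 0
  have "(\<Sum>e\<in>UNIV-{0}. add_char r (e * (1::'a))) = -1" using lam_orth_nz[of 1] by simp
  then show ?case by (simp add: K_0)
next
  case (Suc j)
  have "(\<Sum>e\<in>UNIV-{0}. kloosterman r (Suc j) (e::'a)) =
        (\<Sum>d\<in>UNIV-{0}. \<Sum>e\<in>UNIV-{0}. add_char r (d * inverse e) * kloosterman r j (e::'a))"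
    by (simp add: K_Suc)
  also have "\<dots> = (\<Sum>e\<in>UNIV-{0}. (\<Sum>d\<in>UNIV-{0}. add_char r (d * inverse e)) * kloosterman r j (e::'a))"
    by (subst sum.swap) (simp add: sum_distrib_right)
  also have "\<dots> = (\<Sum>e\<in>UNIV-{0}. (-1) * kloosterman r j (e::'a))"
    by (intro sum.cong refl) (simp add: lam_orth_nz)
  finally show ?case using Suc by (simp add: sum_negf)
qed

lemma K_twist: "(\<Sum>b\<in>UNIV-{0}. add_char r (b * c) * kloosterman r (Suc j) (b::'a)) =
   (if c = 0 then 0 else int (2^r) * kloosterman r j (inverse c)) + (-1)^j"
proof -
  have "(\<Sum>b\<in>UNIV-{0}. add_char r (b * c) * kloosterman r (Suc j) (b::'a)) =
     (\<Sum>b\<in>UNIV-{0}. \<Sum>e\<in>UNIV-{0}. add_char r (b * c) * (add_char r (b * inverse e) * kloosterman r j e))"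
    by (simp add: K_Suc sum_distrib_left)
  also have "\<dots> = (\<Sum>e\<in>UNIV-{0}. \<Sum>b\<in>UNIV-{0}. add_char r (b * (c + inverse e)) * kloosterman r j e)"
    by (subst sum.swap) (intro sum.cong refl, simp add: distrib_left lam_add)
  also have "\<dots> = (\<Sum>e\<in>UNIV-{0}. (\<Sum>b\<in>UNIV-{0}. add_char r (b * (c + inverse e))) * kloosterman r j e)"
    by (simp add: sum_distrib_right)
  also have "\<dots> = (\<Sum>e\<in>UNIV-{0}. ((if e = inverse c \<and> c \<noteq> 0 then int (2^r) else 0) - 1) * kloosterman r j e)"
  proof (intro sum.cong refl)
    fix e :: 'a assume e: "e \<in> UNIV - {0}"
    have "(c + inverse e = 0) = (e = inverse c \<and> c \<noteq> 0)"
    proof -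
      have "(c + inverse e = 0) = (c = inverse e)" using minus_self by (metis add_self add_eq_0_iff)
      thus ?thesis using e by auto
    qed
    thus "(\<Sum>b\<in>UNIV-{0}. add_char r (b * (c + inverse e))) * kloosterman r j e =
       ((if e = inverse c \<and> c \<noteq> 0 then int (2^r) else 0) - 1) * kloosterman r j e"
      by (simp add: lam_orth_nz)
  qed
  also have "\<dots> = (\<Sum>e\<in>UNIV-{0}. (if e = inverse c \<and> c \<noteq> 0 then int (2^r) * kloosterman r j e else 0))
                 - (\<Sum>e\<in>UNIV-{0}. kloosterman r j (e::'a))"
    by (simp add: left_diff_distrib sum_subtractf if_distrib[of "\<lambda>z. z * kloosterman r j _"] cong: if_cong)
  also have "(\<Sum>e\<in>UNIV-{0}. (if e = inverse c \<and> c \<noteq> 0 then int (2^r) * kloosterman r j e else 0)) =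
      (if c = 0 then 0 else int (2^r) * kloosterman r j (inverse c))"
    by (cases "c = 0") (auto simp: sum.delta')
  finally show ?thesis by (simp add: K_total)
qed


end

definition MI :: "'n::finite set \<Rightarrow> ('a::zero_neq_one ^'n^'n) set" where
  "MI I = {A. \<forall>i j. (i \<notin> I \<or> j \<notin> I) \<longrightarrow> A$i$j = (if i = j then 1 else 0)}"

definition VI :: "'n::finite set \<Rightarrow> ('a::zero ^'n) set" where
  "VI J = {v. \<forall>j. j \<notin> J \<longrightarrow> v$j = 0}"

definition trI :: "'n::finite set \<Rightarrow> ('a::comm_monoid_add ^'n^'n) \<Rightarrow> 'a" where
  "trI I A = (\<Sum>i\<in>I. A$i$i)"

definition build :: "'n::finite \<Rightarrow> 'a^'n^'n \<Rightarrow> 'a \<Rightarrow> 'a^'n \<Rightarrow> 'a^'n \<Rightarrow> 'a^'n^'n" where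
  "build k h x r c = (\<chi> i j. if i = k \<and> j = k then x else if i = k then r$j else if j = k then c$i else h$i$j)"

definition colmat :: "'n::finite \<Rightarrow> 'a::zero_neq_one^'n \<Rightarrow> 'a^'n^'n" where
  "colmat k u = (\<chi> i j. if j = k then u$i else if i = j then 1 else 0)"

lemma build_nth[simp]: "build k h x r c $ i $ j =
   (if i = k \<and> j = k then x else if i = k then r$j else if j = k then c$i else h$i$j)"
  by (simp add: build_def)

lemma colmat_nth[simp]: "colmat k u $ i $ j = (if j = k then u$i else if i = j then 1 else 0)"
  by (simp add: colmat_def)

lemma mult_nth: "(A ** B) $ i $ j = (\<Sum>l\<in>UNIV. A$i$l * B$l$j)"
  by (simp add: matrix_matrix_mult_def)

lemma sum_delta_l: "(\<Sum>l\<in>UNIV. (if i = l then 1 else 0) * (f l :: 'a::semiring_1)) = f (i::'n::finite)"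
proof -
  have "(\<Sum>l\<in>UNIV. (if i = l then 1 else 0) * (f l :: 'a::semiring_1)) = (\<Sum>l\<in>UNIV. if i = l then f l else 0)"
    by (rule sum.cong) auto
  also have "\<dots> = f i" by (simp add: sum.delta)
  finally show ?thesis .
qed

lemma sum_delta_r: "(\<Sum>l\<in>UNIV. (f l :: 'a::semiring_1) * (if l = j then 1 else 0)) = f (j::'n::finite)"
proof -
  have "(\<Sum>l\<in>UNIV. (f l :: 'a::semiring_1) * (if l = j then 1 else 0)) = (\<Sum>l\<in>UNIV. if l = j then f l else 0)"
    by (rule sum.cong) auto
  also have "\<dots> = f j" by (simp add: sum.delta)
  finally show ?thesis .
qed

lemma card_VI: "card (VI J :: (('a::{zero,finite})^'n::finite) set) = CARD('a) ^ card J"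
proof -
  have bij: "bij_betw (\<lambda>v. restrict (\<lambda>j. v$j) J) (VI J :: ('a^'n) set) (PiE J (\<lambda>_. UNIV))"
  proof (rule bij_betwI')
    fix v w :: "'a^'n" assume "v \<in> VI J" "w \<in> VI J"
    thus "(restrict (\<lambda>j. v$j) J = restrict (\<lambda>j. w$j) J) = (v = w)"
      by (auto simp: VI_def vec_eq_iff restrict_def fun_eq_iff) metis
  next
    fix v :: "'a^'n" assume "v \<in> VI J" thus "restrict (\<lambda>j. v$j) J \<in> PiE J (\<lambda>_. UNIV)" by simp
  next
    fix f assume f: "f \<in> PiE J (\<lambda>_. (UNIV::'a set))"
    show "\<exists>v\<in>VI J. f = restrict (\<lambda>j. v$j) J"
      by (rule bexI[where x="\<chi> j. if j \<in> J then f j else 0"])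
         (use f in \<open>auto simp: VI_def restrict_def fun_eq_iff PiE_iff extensional_def\<close>)
  qed
  have "card (VI J :: ('a^'n) set) = card (PiE J (\<lambda>_. (UNIV::'a set)))" by (rule bij_betw_same_card[OF bij])
  also have "\<dots> = CARD('a) ^ card J" by (simp add: card_PiE)
  finally show ?thesis .
qed

lemma build_bij:
  assumes k: "k \<notin> J"
  shows "bij_betw (\<lambda>(h,x,r,c). build k h x r c) (MI J \<times> UNIV \<times> VI J \<times> VI J)
            (MI (insert k J) :: ('a::zero_neq_one^'n::finite^'n) set)"
proof (rule bij_betwI')
  fix t1 t2 :: "('a^'n^'n) \<times> 'a \<times> ('a^'n) \<times> ('a^'n)"
  assume t1: "t1 \<in> MI J \<times> UNIV \<times> VI J \<times> VI J" and t2: "t2 \<in> MI J \<times> UNIV \<times> VI J \<times> VI J"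
  obtain h1 x1 r1 c1 where e1: "t1 = (h1,x1,r1,c1)" by (cases t1) auto
  obtain h2 x2 r2 c2 where e2: "t2 = (h2,x2,r2,c2)" by (cases t2) auto
  show "((\<lambda>(h,x,r,c). build k h x r c) t1 = (\<lambda>(h,x,r,c). build k h x r c) t2) = (t1 = t2)"
  proof
    assume eq: "(\<lambda>(h,x,r,c). build k h x r c) t1 = (\<lambda>(h,x,r,c). build k h x r c) t2"
    have E: "\<And>i j. build k h1 x1 r1 c1 $ i $ j = build k h2 x2 r2 c2 $ i $ j" using eq e1 e2 by simp
    have "x1 = x2" using E[of k k] by simp
    moreover have "r1 = r2"
    proof (subst vec_eq_iff, intro allI)
      fix j show "r1$j = r2$j"
        using E[of k j] t1 t2 k unfolding e1 e2 by (cases "j = k") (auto simp: VI_def)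
    qed
    moreover have "c1 = c2"
    proof (subst vec_eq_iff, intro allI)
      fix i show "c1$i = c2$i"
        using E[of i k] t1 t2 k unfolding e1 e2 by (cases "i = k") (auto simp: VI_def)
    qed
    moreover have "h1 = h2"
    proof (subst vec_eq_iff, intro allI, subst vec_eq_iff, intro allI)
      fix i j show "h1$i$j = h2$i$j"
        using E[of i j] t1 t2 k unfolding e1 e2 by (cases "i = k \<or> j = k") (auto simp: MI_def)
    qed
    ultimately show "t1 = t2" using e1 e2 by simp
  qed simp
next
  fix t :: "('a^'n^'n) \<times> 'a \<times> ('a^'n) \<times> ('a^'n)"
  assume t: "t \<in> MI J \<times> UNIV \<times> VI J \<times> VI J"
  obtain h x r c where e: "t = (h,x,r,c)" by (cases t) auto
  show "(\<lambda>(h,x,r,c). build k h x r c) t \<in> MI (insert k J)"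
    using t k unfolding e by (auto simp: MI_def VI_def)
next
  fix A :: "'a^'n^'n" assume A: "A \<in> MI (insert k J)"
  define h where "h = (\<chi> i j. if i = k \<or> j = k then (if i = j then 1 else 0) else A$i$j)"
  define r where "r = (\<chi> j. if j = k then 0 else A$k$j)"
  define c where "c = (\<chi> i. if i = k then 0 else A$i$k)"
  have "(h, A$k$k, r, c) \<in> MI J \<times> UNIV \<times> VI J \<times> VI J"
    using A by (auto simp: MI_def VI_def h_def r_def c_def)
  moreover have "A = build k h (A$k$k) r c"
    by (auto simp: vec_eq_iff h_def r_def c_def)
  ultimately show "\<exists>t\<in>MI J \<times> UNIV \<times> VI J \<times> VI J. A = (\<lambda>(h,x,r,c). build k h x r c) t"
    by force
qed

lemma row_mat1: "row i (mat 1 :: 'a::zero_neq_one^'n::finite^'n) = axis i 1"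
  by (auto simp: row_def mat_def axis_def vec_eq_iff)

lemma det_colmat: "det (colmat k u :: 'a::field^'n::finite^'n) = u$k"
proof -
  define w where "w = (\<chi> j. if j = k then (0::'a) else u$j)"
  define A where "A = (\<chi> l. if l = k then (u$k) *s axis k 1 else row l (mat 1 :: 'a^'n^'n))"
  have w_span: "w \<in> vec.span {row j A | j. j \<noteq> k}"
  proof -
    have "w = (\<Sum>j\<in>UNIV-{k}. (u$j) *s axis j 1)"
      by (auto simp: vec_eq_iff w_def axis_def if_distrib cong: if_cong)
    moreover have "(u$j) *s axis j 1 \<in> vec.span {row j A | j. j \<noteq> k}" if "j \<in> UNIV - {k}" for j
    proof -
      have "axis j 1 = row j A" using that by (simp add: A_def row_def row_mat1[symmetric])
      hence "axis j 1 \<in> {row j A | j. j \<noteq> k}" using that by blast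
      thus ?thesis by (intro vec.span_scale vec.span_base)
    qed
    ultimately show ?thesis by (auto intro!: vec.span_sum)
  qed
  have "transpose (colmat k u) = (\<chi> i. if i = k then row k A + w else row i A)"
    by (auto simp: vec_eq_iff transpose_def A_def w_def row_def mat_def axis_def)
  hence "det (colmat k u) = det (\<chi> i. if i = k then row k A + w else row i A)"
    by (metis det_transpose)
  also have "\<dots> = det A" by (rule det_row_span[OF w_span])
  also have "A = (\<chi> l. if l = k then (u$k) *s axis k 1 else row l (mat 1 :: 'a^'n^'n))" by (simp add: A_def)
  also have "det \<dots> = u$k * det (\<chi> l. if l = k then axis k 1 else row l (mat 1 :: 'a^'n^'n))"
    by (rule det_row_mul)
  also have "(\<chi> l. if l = k then axis k 1 else row l (mat 1 :: 'a^'n^'n)) = mat 1"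
    by (auto simp: vec_eq_iff row_def mat_def axis_def)
  finally show ?thesis by simp
qed

lemma MI_mult: assumes "A \<in> MI I" "B \<in> MI I" shows "A ** B \<in> MI I"
proof -
  have "(A ** B) $ i $ j = (if i = j then 1 else 0)" if "i \<notin> I \<or> j \<notin> I" for i j
  proof (cases "i \<notin> I")
    case True
    hence "(A ** B) $ i $ j = (\<Sum>l\<in>UNIV. (if i = l then 1 else 0) * B$l$j)"
      using assms(1) by (simp add: mult_nth MI_def)
    also have "\<dots> = B$i$j" by (rule sum_delta_l)
    finally show ?thesis using True assms(2) by (simp add: MI_def)
  next
    case False
    hence j: "j \<notin> I" using that by simp
    hence "(A ** B) $ i $ j = (\<Sum>l\<in>UNIV. A$i$l * (if l = j then 1 else 0))"
      using assms(2) by (simp add: mult_nth MI_def)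
    also have "\<dots> = A$i$j" by (rule sum_delta_r)
    finally show ?thesis using j assms(1) by (simp add: MI_def)
  qed
  thus ?thesis by (simp add: MI_def)
qed

lemma MI_inv: assumes A: "A \<in> MI I" and AF: "A ** F = mat 1" and FA: "F ** A = mat 1"
  shows "F \<in> MI I"
proof -
  have "F $ i $ j = (if i = j then 1 else 0)" if "i \<notin> I \<or> j \<notin> I" for i j
  proof (cases "i \<notin> I")
    case True
    have "(A ** F) $ i $ j = (\<Sum>l\<in>UNIV. (if i = l then 1 else 0) * F$l$j)"
      using A True by (simp add: mult_nth MI_def)
    also have "\<dots> = F$i$j" by (rule sum_delta_l)
    finally show ?thesis using AF by (simp add: mat_def)
  next
    case False
    hence j: "j \<notin> I" using that by simp
    have "(F ** A) $ i $ j = (\<Sum>l\<in>UNIV. F$i$l * (if l = j then 1 else 0))"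
      using A j by (simp add: mult_nth MI_def)
    also have "\<dots> = F$i$j" by (rule sum_delta_r)
    finally show ?thesis using FA by (simp add: mat_def)
  qed
  thus ?thesis by (simp add: MI_def)
qed


lemma det_build_split:
  "det (build k h x r c :: 'a::field^'n::finite^'n) = x * det (build k h 1 0 c) + det (build k h 0 r c)"
proof -
  define B where "B = build k h 0 0 c"
  define rr where "rr = (\<chi> j. if j = k then 0 else r$j)"
  have e0: "build k h x r c = (\<chi> i. if i = k then x *s axis k 1 + rr else B$i)"
    by (auto simp: vec_eq_iff B_def rr_def axis_def)
  have e1: "(\<chi> i. if i = k then axis k 1 else B$i) = build k h 1 0 c"
    by (auto simp: vec_eq_iff B_def axis_def)
  have e2: "(\<chi> i. if i = k then rr else B$i) = build k h 0 r c"
    by (auto simp: vec_eq_iff B_def rr_def)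
  have "det (build k h x r c) = det (\<chi> i. if i = k then x *s axis k 1 else B$i) + det (\<chi> i. if i = k then rr else B$i)"
    unfolding e0 by (rule det_row_add)
  also have "det (\<chi> i. if i = k then x *s axis k 1 else B$i) = x * det (\<chi> i. if i = k then axis k 1 else B$i)"
    by (rule det_row_mul)
  finally show ?thesis unfolding e1 e2 .
qed

lemma colmat_mult_nth:
  "(colmat k u ** h) $ i $ j = u$i * h$k$j + (if i = k then 0 else h$i$j :: 'a::semiring_1)"
proof -
  have "(colmat k u ** h) $ i $ j = (\<Sum>l\<in>UNIV. colmat k u $ i $ l * h$l$j)" by (rule mult_nth)
  also have "\<dots> = colmat k u $ i $ k * h$k$j + (\<Sum>l\<in>UNIV-{k}. colmat k u $ i $ l * h$l$j)"
    by (subst sum.remove[of UNIV k]) auto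
  also have "(\<Sum>l\<in>UNIV-{k}. colmat k u $ i $ l * h$l$j) = (\<Sum>l\<in>UNIV-{k}. if l = i then h$l$j else 0)"
    by (rule sum.cong) auto
  also have "\<dots> = (if i = k then 0 else h$i$j)" by (simp add: sum.delta')
  finally show ?thesis by simp
qed

lemma det_build_1:
  assumes h: "h \<in> MI J" and c: "c \<in> VI J" and k: "k \<notin> J"
  shows "det (build k h 1 0 c :: 'a::field^'n::finite^'n) = det h"
proof -
  define u where "u = c + axis k 1"
  have ck: "c$k = 0" using c k by (simp add: VI_def)
  have hk: "h$k$j = (if k = j then 1 else 0)" "h$i$k = (if i = k then 1 else 0)" for i j
    using h k by (auto simp: MI_def)
  have "build k h 1 0 c = colmat k u ** h"
    by (auto simp: vec_eq_iff colmat_mult_nth u_def ck hk axis_def)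
  hence "det (build k h 1 0 c) = det (colmat k u) * det h" by (simp add: det_mul)
  moreover have "det (colmat k u) = 1" by (simp add: det_colmat u_def ck axis_def)
  ultimately show ?thesis by simp
qed

lemma det_build_r0: "det (build k h 0 r 0 :: 'a::field^'n::finite^'n) = 0"
proof -
  have "column k (build k h 0 r 0) = 0" by (auto simp: column_def vec_eq_iff)
  thus ?thesis by (rule det_zero_column(2))
qed

lemma det_build_lin:
  assumes r: "r \<in> VI J" and k: "k \<notin> J"
  shows "det (build k h 0 r c :: 'a::field^'n::finite^'n) = (\<Sum>j\<in>J. r$j * det (build k h 0 (axis j 1) c))"
proof -
  define B where "B = build k h 0 0 c"
  have e0: "build k h 0 r c = (\<chi> i. if i = k then sum (\<lambda>j. r$j *s axis j 1) J else B$i)"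
  proof (subst vec_eq_iff, intro allI, subst vec_eq_iff, intro allI)
    fix i l
    show "build k h 0 r c $ i $ l = (\<chi> i. if i = k then sum (\<lambda>j. r$j *s axis j 1) J else B$i) $ i $ l"
    proof (cases "i = k")
      case True
      have "(\<Sum>j\<in>J. r$j * (if l = j then 1 else 0)) = (\<Sum>j\<in>J. if l = j then r$j else 0)"
        by (rule sum.cong) auto
      also have "\<dots> = (if l \<in> J then r$l else 0)" by (simp add: sum.delta)
      finally show ?thesis using True r k by (auto simp: VI_def axis_def)
    qed (simp add: B_def)
  qed
  have e1: "(\<chi> i. if i = k then axis j 1 else B$i) = build k h 0 (axis j 1) c" if "j \<in> J" for j
    using that k by (auto simp: vec_eq_iff B_def axis_def)
  have "det (build k h 0 r c) = (\<Sum>j\<in>J. det (\<chi> i. if i = k then r$j *s axis j 1 else B$i))"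
    unfolding e0 by (rule det_linear_row_sum) simp
  also have "\<dots> = (\<Sum>j\<in>J. r$j * det (\<chi> i. if i = k then axis j 1 else B$i))"
    by (intro sum.cong refl det_row_mul)
  also have "\<dots> = (\<Sum>j\<in>J. r$j * det (build k h 0 (axis j 1) c))"
    by (intro sum.cong refl) (simp add: e1)
  finally show ?thesis .
qed

lemma build_nondeg:
  assumes h: "h \<in> MI J" and dh: "det h \<noteq> 0" and c: "c \<in> VI J" and k: "k \<notin> J"
    and z: "\<forall>j\<in>J. det (build k h 0 (axis j 1) c :: 'a::field^'n::finite^'n) = 0"
  shows "c = 0"
proof (rule ccontr)
  assume "c \<noteq> 0"
  then obtain i0 where ci0: "c$i0 \<noteq> 0" by (auto simp: vec_eq_iff)
  hence i0J: "i0 \<in> J" using c by (auto simp: VI_def)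
  hence i0k: "i0 \<noteq> k" using k by auto
  define B where "B = build k h 0 0 c"
  define w where "w = (\<chi> j. if j = k then 0 else inverse (c$i0) * B$i0$j)"
  have wV: "w \<in> VI J"
  proof -
    have "w$j = 0" if "j \<notin> J" for j
    proof (cases "j = k")
      case False
      hence "B$i0$j = h$i0$j" using i0k by (simp add: B_def)
      also have "\<dots> = 0" using h that i0J by (auto simp: MI_def)
      finally show ?thesis by (simp add: w_def)
    qed (simp add: w_def)
    thus ?thesis by (simp add: VI_def)
  qed
  have "det (build k h 1 w c) = 1 * det (build k h 1 0 c) + det (build k h 0 w c)"
    by (rule det_build_split)
  also have "det (build k h 0 w c) = 0"
    using det_build_lin[OF wV k, of h c] z by simp
  also have "det (build k h 1 0 c) = det h" by (rule det_build_1[OF h c k])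
  finally have d1: "det (build k h 1 w c) = det h" by simp
  have "build k h 1 w c = (\<chi> i. if i = k then inverse (c$i0) *s B$i0 else B$i)"
    using i0k ci0 by (auto simp: vec_eq_iff B_def w_def)
  hence "det (build k h 1 w c) = inverse (c$i0) * det (\<chi> i. if i = k then B$i0 else B$i)"
    by (simp add: det_row_mul)
  also have "det (\<chi> i. if i = k then B$i0 else B$i) = 0"
    by (rule det_identical_rows[of k i0]) (use i0k in \<open>auto simp: row_def vec_eq_iff\<close>)
  finally show False using d1 dh by simp
qed

lemma trI_build: assumes "k \<notin> J" "finite J"
  shows "trI (insert k J) (build k h x r c) = x + trI J (h :: 'a::comm_monoid_add^'n::finite^'n)"
proof -
  have "trI J (build k h x r c) = trI J h" using assms unfolding trI_def by (intro sum.cong) auto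
  thus ?thesis using assms by (simp add: trI_def)
qed

lemma sum_MI_insert:
  assumes k: "k \<notin> J"
  shows "(\<Sum>A\<in>MI (insert k J). f A) =
    (\<Sum>h\<in>MI J. \<Sum>x\<in>UNIV. \<Sum>v\<in>VI J. \<Sum>c\<in>VI J. f (build k h x v c :: 'a::{zero_neq_one,finite}^'n::finite^'n))"
proof -
  have "(\<Sum>A\<in>MI (insert k J). f A) = (\<Sum>t\<in>MI J \<times> UNIV \<times> VI J \<times> VI J. f ((\<lambda>(h,x,r,c). build k h x r c) t))"
    using sum.reindex_bij_betw[OF build_bij[OF k], of f] by simp
  also have "\<dots> = (\<Sum>h\<in>MI J. \<Sum>x\<in>UNIV. \<Sum>v\<in>VI J. \<Sum>c\<in>VI J. f (build k h x v c))"
    by (simp add: sum.cartesian_product split_def)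
  finally show ?thesis .
qed

lemma MI_empty: "MI {} = {mat 1 :: 'a::zero_neq_one^'n::finite^'n}"
  by (auto simp: MI_def mat_def vec_eq_iff)

lemma MI_UNIV: "MI UNIV = (UNIV :: ('a::zero_neq_one^'n::finite^'n) set)"
  by (auto simp: MI_def)

lemma finite_MI: "finite (MI I :: ('a::{zero_neq_one,finite}^'n::finite^'n) set)"
  by simp

lemma finite_VI: "finite (VI I :: ('a::{zero,finite}^'n::finite) set)"
  by simp

context
  fixes r :: nat
  assumes card2: "CARD('a::{field,finite}) = 2^r" and rpos: "r > 0"
begin

lemma orth_VI:
  "(\<Sum>v\<in>VI J. add_char r (\<Sum>j\<in>J. v$j * (y j :: 'a))) =
     (if \<forall>j\<in>J. y j = 0 then int (2^r) ^ card J else 0)"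
  for J :: "'n::finite set"
proof (cases "\<forall>j\<in>J. y j = 0")
  case True
  hence "(\<Sum>v\<in>VI J. add_char r (\<Sum>j\<in>J. v$j * (y j :: 'a))) = (\<Sum>v\<in>(VI J :: ('a^'n) set). 1)" by (simp add: lam_0[OF card2 rpos])
  also have "\<dots> = int (card (VI J :: ('a^'n) set))" by simp
  also have "\<dots> = int (2^r) ^ card J" using card_VI[where 'a='a and J=J] card2 by simp
  finally show ?thesis using True by simp
next
  case False
  then obtain j0 where j0: "j0 \<in> J" "y j0 \<noteq> 0" by auto
  obtain t :: 'a where t: "add_char r t = -1" using lam_nontriv[OF card2 rpos] by blast
  define \<delta> where "\<delta> = (t / y j0) *s (axis j0 1 :: 'a^'n)"
  have dV: "\<delta> \<in> VI J" using j0 by (auto simp: VI_def \<delta>_def axis_def)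
  have bij: "bij_betw (\<lambda>v. v + \<delta>) (VI J) (VI J)"
  proof (rule bij_betwI[where g="\<lambda>v. v - \<delta>"])
  qed (use dV in \<open>auto simp: VI_def\<close>)
  have shift: "(\<Sum>j\<in>J. (v + \<delta>)$j * y j) = (\<Sum>j\<in>J. v$j * y j) + t" for v
  proof -
    have "(\<Sum>j\<in>J. (v + \<delta>)$j * y j) = (\<Sum>j\<in>J. v$j * y j) + (\<Sum>j\<in>J. \<delta>$j * y j)"
      by (simp add: distrib_right sum.distrib)
    also have "(\<Sum>j\<in>J. \<delta>$j * y j) = (\<Sum>j\<in>J. if j = j0 then t else 0)"
      using j0 by (intro sum.cong refl) (auto simp: \<delta>_def axis_def)
    also have "\<dots> = t" using j0 by (simp add: sum.delta')
    finally show ?thesis .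
  qed
  have "(\<Sum>v\<in>VI J. add_char r (\<Sum>j\<in>J. v$j * y j)) = (\<Sum>v\<in>VI J. add_char r (\<Sum>j\<in>J. (v + \<delta>)$j * y j))"
    using sum.reindex_bij_betw[OF bij, of "\<lambda>v. add_char r (\<Sum>j\<in>J. v$j * y j)"] by simp
  also have "\<dots> = (\<Sum>v\<in>VI J. add_char r (\<Sum>j\<in>J. v$j * y j) * add_char r t)"
    by (intro sum.cong refl) (simp only: shift lam_add[OF card2 rpos])
  also have "\<dots> = - (\<Sum>v\<in>VI J. add_char r (\<Sum>j\<in>J. v$j * y j))"
    by (simp add: t sum_negf)
  finally show ?thesis using False by simp
qed

definition SS :: "'n::finite set \<Rightarrow> 'a \<Rightarrow> int" where
  "SS I d = (\<Sum>A\<in>(MI I :: ('a^'n^'n) set). if det A = d then add_char r (trI I A) else 0)"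

lemma SS_insert:
  fixes k :: "'n::finite"
  assumes k: "k \<notin> J"
  shows "SS (insert k J) d = int (2^r) ^ card J * (\<Sum>e\<in>UNIV-{0}. add_char r (d * inverse e) * SS J e)"
proof -
  have fJ: "finite J" by simp
  let ?q = "int (2^r)"
  let ?G = "\<lambda>h. \<Sum>x\<in>UNIV. \<Sum>v\<in>VI J. \<Sum>c\<in>VI J. (if x * det h + det (build k h 0 v c) = d
                  then add_char r x * add_char r (trI J h) else (0::int))"
  have step1: "SS (insert k J) d = (\<Sum>h\<in>MI J. ?G h)"
    unfolding SS_def sum_MI_insert[OF k]
  proof (intro sum.cong refl)
    fix h :: "'a^'n^'n" and x :: 'a and v c :: "'a^'n" assume h: "h \<in> MI J" and c: "c \<in> VI J"
    show "(if det (build k h x v c) = d then add_char r (trI (insert k J) (build k h x v c)) else 0) =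
          (if x * det h + det (build k h 0 v c) = d then add_char r x * add_char r (trI J h) else 0)"
      using det_build_split[of k h x v c] det_build_1[OF h c k] trI_build[OF k fJ, of h x v c]
      by (simp add: lam_add[OF card2 rpos])
  qed
  have step2: "?G h = (if det h = 0 then 0 else ?q ^ card J * (add_char r (d * inverse (det h)) * add_char r (trI J h)))"
    if h: "h \<in> MI J" for h
  proof (cases "det h = 0")
    case True
    have "?G h = (\<Sum>x\<in>UNIV. add_char r (x::'a) * (\<Sum>v\<in>VI J. \<Sum>c\<in>VI J. (if det (build k h 0 v c) = d
                  then add_char r (trI J h) else (0::int))))"
    proof (intro sum.cong refl)
      fix x :: 'a
      show "(\<Sum>v\<in>VI J. \<Sum>c\<in>VI J. (if x * det h + det (build k h 0 v c) = d
                  then add_char r x * add_char r (trI J h) else (0::int))) =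
            add_char r x * (\<Sum>v\<in>VI J. \<Sum>c\<in>VI J. (if det (build k h 0 v c) = d
                  then add_char r (trI J h) else (0::int)))"
        unfolding sum_distrib_left by (intro sum.cong refl) (simp add: True)
    qed
    also have "\<dots> = (\<Sum>x\<in>UNIV. add_char r (x::'a)) * (\<Sum>v\<in>VI J. \<Sum>c\<in>VI J. (if det (build k h 0 v c) = d
                  then add_char r (trI J h) else (0::int)))"
      by (simp add: sum_distrib_right)
    also have "\<dots> = 0" by (simp add: lam_sum0[OF card2 rpos])
    finally show ?thesis using True by simp
  next
    case False
    define D where "D = det h"
    define R where "R = (\<lambda>v c. det (build k h 0 v c))"
    have "?G h = (\<Sum>v\<in>VI J. \<Sum>c\<in>VI J. \<Sum>x\<in>UNIV. (if x = (d - R v c) / D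
                  then add_char r x * add_char r (trI J h) else (0::int)))"
    proof -
      have "?G h = (\<Sum>x\<in>UNIV. \<Sum>v\<in>VI J. \<Sum>c\<in>VI J. (if x = (d - R v c) / D
                  then add_char r x * add_char r (trI J h) else (0::int)))"
      proof (intro sum.cong refl)
        fix x :: 'a and v c :: "'a^'n"
        have "(x * det h + det (build k h 0 v c) = d) = (x = (d - R v c) / D)"
        proof -
          have "(x = (d - R v c) / D) = (x * D = d - R v c)" using False by (simp add: D_def eq_divide_eq)
          also have "\<dots> = (x * D + R v c = d)" by (simp add: eq_diff_eq)
          finally show ?thesis by (simp add: D_def R_def)
        qed
        thus "(if x * det h + det (build k h 0 v c) = d then add_char r x * add_char r (trI J h) else 0) =
              (if x = (d - R v c) / D then add_char r x * add_char r (trI J h) else 0)" by simp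
      qed
      also have "\<dots> = (\<Sum>v\<in>VI J. \<Sum>x\<in>UNIV. \<Sum>c\<in>VI J. (if x = (d - R v c) / D
                  then add_char r x * add_char r (trI J h) else (0::int)))" by (rule sum.swap)
      also have "\<dots> = (\<Sum>v\<in>VI J. \<Sum>c\<in>VI J. \<Sum>x\<in>UNIV. (if x = (d - R v c) / D
                  then add_char r x * add_char r (trI J h) else (0::int)))" by (intro sum.cong refl sum.swap)
      finally show ?thesis .
    qed
    also have "\<dots> = (\<Sum>v\<in>VI J. \<Sum>c\<in>VI J. add_char r (d * inverse D) * add_char r (trI J h) *
                        add_char r (R v c / D))"
    proof (intro sum.cong refl)
      fix v c :: "'a^'n"
      have "(d - R v c) / D = d * inverse D + R v c / D"
      proof -
        have "(d - R v c) / D = d * inverse D + (- (R v c / D))" by (simp add: divide_inverse left_diff_distrib)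
        also have "- (R v c / D) = R v c / D" by (rule minus_self[OF card2 rpos])
        finally show ?thesis .
      qed
      thus "(\<Sum>x\<in>UNIV. (if x = (d - R v c) / D then add_char r x * add_char r (trI J h) else (0::int))) =
            add_char r (d * inverse D) * add_char r (trI J h) * add_char r (R v c / D)"
        by (simp add: lam_add[OF card2 rpos])
    qed
    also have "\<dots> = add_char r (d * inverse D) * add_char r (trI J h) *
                     (\<Sum>c\<in>VI J. \<Sum>v\<in>VI J. add_char r (R v c / D))"
      by (subst sum.swap) (simp add: sum_distrib_left)
    also have "(\<Sum>c\<in>VI J. \<Sum>v\<in>VI J. add_char r (R v c / D)) = (\<Sum>c\<in>(VI J :: ('a^'n) set). if c = 0 then ?q ^ card J else 0)"
    proof (intro sum.cong refl)
      fix c :: "'a^'n" assume c: "c \<in> VI J"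
      have "(\<Sum>v\<in>VI J. add_char r (R v c / D)) =
            (\<Sum>v\<in>VI J. add_char r (\<Sum>j\<in>J. v$j * (R (axis j 1) c / D)))"
      proof (intro sum.cong refl)
        fix v :: "'a^'n" assume v: "v \<in> VI J"
        show "add_char r (R v c / D) = add_char r (\<Sum>j\<in>J. v$j * (R (axis j 1) c / D))"
          using det_build_lin[OF v k, of h c] by (simp add: R_def sum_divide_distrib)
      qed
      also have "\<dots> = (if \<forall>j\<in>J. R (axis j 1) c / D = 0 then ?q ^ card J else 0)" by (rule orth_VI)
      also have "(\<forall>j\<in>J. R (axis j 1) c / D = 0) = (c = 0)"
      proof
        assume "\<forall>j\<in>J. R (axis j 1) c / D = 0"
        hence "\<forall>j\<in>J. det (build k h 0 (axis j 1) c) = 0" using False by (simp add: R_def D_def)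
        thus "c = 0" using build_nondeg[OF h False c k] by blast
      next
        assume "c = 0" thus "\<forall>j\<in>J. R (axis j 1) c / D = 0" by (simp add: R_def det_build_r0)
      qed
      finally show "(\<Sum>v\<in>VI J. add_char r (R v c / D)) = (if c = 0 then ?q ^ card J else 0)" .
    qed
    also have "\<dots> = ?q ^ card J"
    proof -
      have "(0::'a^'n) \<in> VI J" by (simp add: VI_def)
      thus ?thesis by (simp add: sum.delta')
    qed
    finally show ?thesis using False by (simp add: D_def mult_ac)
  qed
  have "SS (insert k J) d = (\<Sum>h\<in>MI J. if det h = 0 then 0 else
            ?q ^ card J * (add_char r (d * inverse (det h)) * add_char r (trI J h)))"
    unfolding step1 by (intro sum.cong refl step2)
  also have "\<dots> = ?q ^ card J * (\<Sum>h\<in>MI J. \<Sum>e\<in>UNIV-{0}. if det h = e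
            then add_char r (d * inverse e) * add_char r (trI J h) else 0)"
  proof -
    have ph: "(\<Sum>e\<in>UNIV-{0}. if det h = e then add_char r (d * inverse e) * add_char r (trI J h) else 0) =
       (if det h = 0 then 0 else add_char r (d * inverse (det h)) * add_char r (trI J h))" for h :: "'a^'n^'n"
      by (simp add: sum.delta')
    show ?thesis unfolding ph sum_distrib_left by (intro sum.cong refl) simp
  qed
  also have "\<dots> = ?q ^ card J * (\<Sum>e\<in>UNIV-{0}. add_char r (d * inverse e) * SS J e)"
    by (subst sum.swap) (simp add: SS_def sum_distrib_left if_distrib cong: if_cong)
  finally show ?thesis .
qed


lemma SS_empty: "SS ({}::'n::finite set) e = (if e = 1 then 1 else 0)"
  by (simp add: SS_def MI_empty trI_def lam_0[OF card2 rpos])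

lemma SS_formula:
  fixes I :: "'n::finite set"
  assumes "I \<noteq> {}"
  shows "SS I d = int (2^r) ^ (card I choose 2) * kloosterman r (card I - 1) d"
proof -
  have "finite I" by simp
  thus ?thesis using assms
  proof (induction I arbitrary: d rule: finite_induct)
    case empty then show ?case by simp
  next
    case (insert k J)
    show ?case
    proof (cases "J = {}")
      case True
      have "SS (insert k J) d = (\<Sum>e\<in>UNIV-{0}. add_char r (d * inverse e) * (if e = 1 then 1 else 0))"
        using SS_insert[OF insert(2), of d] True by (simp add: SS_empty)
      also have "\<dots> = (\<Sum>e\<in>UNIV-{0}. if e = 1 then add_char r (d * inverse e) else 0)"
        by (intro sum.cong refl) simp
      also have "\<dots> = add_char r d" by (simp add: sum.delta)
      finally show ?thesis using True by (simp add: K_0[OF card2 rpos] binomial_eq_0)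
    next
      case False
      obtain m where m: "card J = Suc m" using False insert(1) by (cases "card J") auto
      have "SS (insert k J) d = int (2^r) ^ card J * (\<Sum>e\<in>UNIV-{0}. add_char r (d * inverse e) *
               (int (2^r) ^ (card J choose 2) * kloosterman r (card J - 1) e))"
        using SS_insert[OF insert(2), of d] insert(3)[OF False] by simp
      also have "\<dots> = int (2^r) ^ card J * int (2^r) ^ (card J choose 2) *
             (\<Sum>e\<in>UNIV-{0}. add_char r (d * inverse e) * kloosterman r m e)"
        by (simp add: m sum_distrib_left mult_ac)
      also have "(\<Sum>e\<in>UNIV-{0}. add_char r (d * inverse e) * kloosterman r m e) = kloosterman r (Suc m) d"
        by (simp add: K_Suc[OF card2 rpos])
      also have "int (2^r) ^ card J * int (2^r) ^ (card J choose 2) = int (2^r) ^ (card (insert k J) choose 2)"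
      proof -
        have "card (insert k J) choose 2 = card J + (card J choose 2)"
          using insert(1,2) m by (simp add: numeral_2_eq_2)
        thus ?thesis by (simp add: power_add)
      qed
      finally show ?thesis using insert(1,2) m by simp
    qed
  qed
qed

lemma SS_UNIV: "(\<Sum>A\<in>(UNIV::('a^'n::finite^'n) set). if det A = d then add_char r (trace A) else 0) =
     int (2^r) ^ (CARD('n) choose 2) * kloosterman r (CARD('n) - 1) d"
proof -
  have eq: "\<And>A::'a^'n^'n. trI UNIV A = trace A" by (simp add: trI_def trace_def)
  have "SS (UNIV::'n set) d = int (2^r) ^ (CARD('n) choose 2) * kloosterman r (CARD('n) - 1) d"
    by (rule SS_formula) simp
  thus ?thesis unfolding SS_def MI_UNIV eq .
qed

end

definition SLI :: "'n::finite set \<Rightarrow> ('a::field^'n^'n) set" where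
  "SLI I = {A \<in> MI I. det A = 1}"

lemma column_mult: "column k (X ** A) = X *v column k (A :: 'a::semiring_1^'n::finite^'n)"
  by (simp add: vec_eq_iff column_def matrix_vector_mult_def mult_nth)

lemma mult_axis: "X *v axis k 1 = column k (X :: 'a::semiring_1^'n::finite^'n)"
  by (simp add: vec_eq_iff column_def matrix_vector_mult_def axis_def sum_delta_r)

lemma Z2:
  fixes k :: "'n::finite" and J :: "'n set"
  assumes k: "k \<notin> J"
  shows "card {A \<in> (SLI (insert k J) :: ('a::{field,finite}^'n^'n) set). column k A = axis k 1}
           = CARD('a) ^ card J * card (SLI J :: ('a^'n^'n) set)"
proof -
  let ?b = "\<lambda>(h,x,r,c). build k h x r c :: 'a^'n^'n"
  let ?D = "(SLI J :: ('a^'n^'n) set) \<times> {1::'a} \<times> (VI J :: ('a^'n) set) \<times> {0::'a^'n}"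
  have sub: "?D \<subseteq> MI J \<times> UNIV \<times> VI J \<times> VI J" by (auto simp: SLI_def VI_def)
  have inj: "inj_on ?b ?D"
    using bij_betw_imp_inj_on[OF build_bij[OF k]] sub by (rule inj_on_subset)
  have eq: "{A \<in> (SLI (insert k J) :: ('a^'n^'n) set). column k A = axis k 1} = ?b ` ?D"
  proof
    show "?b ` ?D \<subseteq> {A \<in> SLI (insert k J). column k A = axis k 1}"
    proof
      fix A assume "A \<in> ?b ` ?D"
      then obtain h v where h: "h \<in> SLI J" and v: "v \<in> VI J" and A: "A = build k h 1 v 0" by auto
      have hM: "h \<in> MI J" and dh: "det h = 1" using h by (auto simp: SLI_def)
      have z: "(0::'a^'n) \<in> VI J" by (simp add: VI_def)
      have "A \<in> MI (insert k J)"
        using bij_betw_imp_surj_on[OF build_bij[OF k]] hM v z A by force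
      moreover have "det A = 1"
        using det_build_split[of k h 1 v 0] det_build_1[OF hM z k] det_build_r0[of k h v] dh A by simp
      moreover have "column k A = axis k 1" using A by (auto simp: column_def axis_def vec_eq_iff)
      ultimately show "A \<in> {A \<in> SLI (insert k J). column k A = axis k 1}" by (simp add: SLI_def)
    qed
  next
    show "{A \<in> SLI (insert k J). column k A = axis k 1} \<subseteq> ?b ` ?D"
    proof
      fix A :: "'a^'n^'n" assume A: "A \<in> {A \<in> SLI (insert k J). column k A = axis k 1}"
      hence AM: "A \<in> MI (insert k J)" and dA: "det A = 1" and cA: "column k A = axis k 1"
        by (auto simp: SLI_def)
      obtain t where t: "t \<in> MI J \<times> UNIV \<times> VI J \<times> VI J" and At: "A = ?b t"
        using bij_betw_imp_surj_on[OF build_bij[OF k]] AM by force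
      obtain h x v c where tt: "t = (h,x,v,c)" by (cases t) auto
      have hM: "h \<in> MI J" and v: "v \<in> VI J" and c: "c \<in> VI J" using t tt by auto
      have A': "A = build k h x v c" using At tt by simp
      have x1: "x = 1" using cA A' by (auto simp: column_def axis_def vec_eq_iff dest: spec[of _ k])
      have c0: "c = 0"
      proof (subst vec_eq_iff, intro allI)
        fix i show "c$i = 0$i"
        proof (cases "i = k")
          case True thus ?thesis using c k by (simp add: VI_def)
        next
          case False thus ?thesis using cA A' by (auto simp: column_def axis_def vec_eq_iff dest: spec[of _ i])
        qed
      qed
      have z: "(0::'a^'n) \<in> VI J" by (simp add: VI_def)
      have "det h = 1"
        using det_build_split[of k h 1 v 0] det_build_1[OF hM z k] det_build_r0[of k h v] dA A' x1 c0 by simp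
      hence "(h,x,v,c) \<in> ?D" using hM v x1 c0 by (simp add: SLI_def)
      thus "A \<in> ?b ` ?D" using A' by force
    qed
  qed
  have "card (?b ` ?D) = card ?D" by (rule card_image[OF inj])
  also have "\<dots> = card (SLI J :: ('a^'n^'n) set) * card (VI J :: ('a^'n) set)"
    by (simp add: card_cartesian_product)
  finally show ?thesis unfolding eq by (simp add: card_VI)
qed


lemma colmat_MI: assumes "k \<in> I" "u \<in> VI I" shows "colmat k u \<in> MI I"
  using assms by (auto simp: MI_def VI_def)

lemma colmat_mulv: fixes m :: "'n::finite" shows "colmat m u *v x = (\<chi> i. u$i * x$m + (if i = m then 0 else x$i :: 'a::semiring_1))"
proof (subst vec_eq_iff, intro allI)
  fix i :: 'n
  have "(colmat m u *v x) $ i = (\<Sum>l\<in>UNIV. colmat m u $ i $ l * x$l)" by (simp add: matrix_vector_mult_def)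
  also have "\<dots> = colmat m u $ i $ m * x$m + (\<Sum>l\<in>UNIV-{m}. colmat m u $ i $ l * x$l)"
    by (subst sum.remove[of UNIV m]) auto
  also have "(\<Sum>l\<in>UNIV-{m}. colmat m u $ i $ l * x$l) = (\<Sum>l\<in>UNIV-{m}. if l = i then x$l else 0)"
    by (rule sum.cong) auto
  also have "\<dots> = (if i = m then 0 else x$i)" by (simp add: sum.delta')
  finally show "(colmat m u *v x) $ i = (\<chi> i. u$i * x$m + (if i = m then 0 else x$i)) $ i" by simp
qed

lemma column_colmat: "column k (colmat k u) = u"
  by (simp add: column_def vec_eq_iff)

lemma column_colmat_other: "m \<noteq> k \<Longrightarrow> column k (colmat m u) = axis k (1::'a::zero_neq_one)"
  by (auto simp: column_def vec_eq_iff axis_def)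

lemma exists_E:
  fixes k m :: "'n::finite" and I :: "'n set" and v :: "'a::field^'n"
  assumes kI: "k \<in> I" and mI: "m \<in> I" and mk: "m \<noteq> k" and vI: "v \<in> VI I" and v0: "v \<noteq> 0"
  shows "\<exists>E\<in>MI I. det E = 1 \<and> column k E = v"
proof (cases "v$k = 0")
  case False
  define w where "w = inverse (v$k) *s (axis m 1 :: 'a^'n)"
  have wI: "w \<in> VI I" using mI by (auto simp: VI_def w_def axis_def)
  define E where "E = colmat k v ** colmat m w"
  have "E \<in> MI I" unfolding E_def by (intro MI_mult colmat_MI kI vI mI wI)
  moreover have "det E = 1" using False by (simp add: E_def det_mul det_colmat w_def axis_def)
  moreover have "column k E = v"
    using mk by (simp add: E_def column_mult column_colmat_other mult_axis column_colmat)
  ultimately show ?thesis by blast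
next
  case True
  obtain m' where vm: "v$m' \<noteq> 0" using v0 by (auto simp: vec_eq_iff)
  have m'I: "m' \<in> I" using vm vI by (auto simp: VI_def)
  have m'k: "m' \<noteq> k" using vm True by auto
  define v' where "v' = v + axis k 1"
  define u where "u = axis m' 1 - inverse (v$m') *s (axis k 1 :: 'a^'n)"
  have v'I: "v' \<in> VI I" using vI kI by (auto simp: VI_def v'_def axis_def)
  have uI: "u \<in> VI I" using kI m'I by (auto simp: VI_def u_def axis_def)
  define E where "E = colmat m' u ** colmat k v'"
  have "E \<in> MI I" unfolding E_def by (intro MI_mult colmat_MI kI m'I v'I uI)
  moreover have "det E = 1" using True m'k by (simp add: E_def det_mul det_colmat u_def v'_def axis_def)
  moreover have "column k E = v"
  proof -
    have "column k E = colmat m' u *v v'" by (simp add: E_def column_mult column_colmat)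
    also have "\<dots> = v"
      using True m'k vm by (auto simp: colmat_mulv vec_eq_iff u_def v'_def axis_def)
    finally show ?thesis .
  qed
  ultimately show ?thesis by blast
qed

lemma fiber_eq:
  fixes k m :: "'n::finite" and I :: "'n set" and v :: "'a::field^'n"
  assumes kI: "k \<in> I" and mI: "m \<in> I" and mk: "m \<noteq> k" and vI: "v \<in> VI I" and v0: "v \<noteq> 0"
  shows "card {A \<in> SLI I. column k A = v} = card {A \<in> SLI I. column k A = axis k (1::'a)}"
proof -
  obtain E where EI: "E \<in> MI I" and dE: "det E = 1" and cE: "column k E = v"
    using exists_E[OF kI mI mk vI v0] by blast
  have "invertible E" using dE by (simp add: invertible_det_nz)
  then obtain F where EF: "E ** F = mat 1" and FE: "F ** E = mat 1" by (auto simp: invertible_def)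
  have FI: "F \<in> MI I" by (rule MI_inv[OF EI EF FE])
  have dF: "det F = 1" using arg_cong[OF EF, of det] dE by (simp add: det_mul)
  have "bij_betw (\<lambda>A. E ** A) {A \<in> SLI I. column k A = axis k 1} {A \<in> SLI I. column k A = v}"
  proof (rule bij_betwI[where g="\<lambda>B. F ** B"])
    show "(\<lambda>A. E ** A) \<in> {A \<in> SLI I. column k A = axis k 1} \<rightarrow> {A \<in> SLI I. column k A = v}"
      using EI dE cE by (auto simp: SLI_def MI_mult det_mul column_mult mult_axis)
    show "(\<lambda>B. F ** B) \<in> {A \<in> SLI I. column k A = v} \<rightarrow> {A \<in> SLI I. column k A = axis k 1}"
    proof
      fix B assume B: "B \<in> {A \<in> SLI I. column k A = v}"
      have "column k (F ** B) = F *v (E *v axis k 1)" using B cE by (simp add: column_mult mult_axis)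
      also have "\<dots> = axis k 1" by (simp add: matrix_vector_mul_assoc FE)
      finally show "F ** B \<in> {A \<in> SLI I. column k A = axis k 1}"
        using B FI dF by (auto simp: SLI_def MI_mult det_mul)
    qed
    show "F ** (E ** A) = A" for A by (simp add: matrix_mul_assoc FE)
    show "E ** (F ** B) = B" for B by (simp add: matrix_mul_assoc EF)
  qed
  from bij_betw_same_card[OF this] show ?thesis by (rule sym)
qed

lemma Z3:
  fixes k m :: "'n::finite" and I :: "'n set"
  assumes kI: "k \<in> I" and mI: "m \<in> I" and mk: "m \<noteq> k"
  shows "card (SLI I :: ('a::{field,finite}^'n^'n) set) =
           (CARD('a) ^ card I - 1) * card {A \<in> (SLI I :: ('a^'n^'n) set). column k A = axis k 1}"
proof -
  let ?S = "SLI I :: ('a^'n^'n) set"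
  let ?V = "(VI I :: ('a^'n) set) - {0}"
  have sub: "(\<lambda>A. column k A) ` ?S \<subseteq> ?V"
  proof
    fix w assume "w \<in> (\<lambda>A. column k A) ` ?S"
    then obtain A where A: "A \<in> ?S" and w: "w = column k A" by auto
    have "w \<in> VI I" using A kI by (auto simp: SLI_def MI_def VI_def w column_def)
    moreover have "w \<noteq> 0"
    proof
      assume "w = 0" hence "column k A = 0" using w by simp
      hence "det A = 0" by (rule det_zero_column(2))
      thus False using A by (simp add: SLI_def)
    qed
    ultimately show "w \<in> ?V" by simp
  qed
  have "card ?S = (\<Sum>A\<in>?S. 1)" by simp
  also have "\<dots> = (\<Sum>w\<in>?V. \<Sum>A\<in>{A. A \<in> ?S \<and> column k A = w}. 1)"
    by (rule sum.group[symmetric]) (use sub in auto)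
  also have "\<dots> = (\<Sum>w\<in>?V. card {A \<in> ?S. column k A = axis k 1})"
    by (intro sum.cong refl) (use fiber_eq[OF kI mI mk] in auto)
  also have "\<dots> = card ?V * card {A \<in> ?S. column k A = axis k 1}" by simp
  also have "card ?V = CARD('a) ^ card I - 1"
  proof -
    have z: "(0::'a^'n) \<in> VI I" by (simp add: VI_def)
    show ?thesis by (simp add: card_Diff_subset z card_VI)
  qed
  finally show ?thesis .
qed

lemma SLI_empty: "SLI {} = {mat 1 :: 'a::field^'n::finite^'n}"
  by (auto simp: SLI_def MI_empty)

lemma Z_formula:
  fixes I :: "'n::finite set"
  assumes "I \<noteq> {}"
  shows "card (SLI I :: ('a::{field,finite}^'n^'n) set) =
     CARD('a) ^ (card I choose 2) * (\<Prod>j=2..card I. CARD('a) ^ j - 1)"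
proof -
  have "finite I" by simp
  thus ?thesis using assms
  proof (induction I rule: finite_induct)
    case empty then show ?case by simp
  next
    case (insert k J)
    show ?case
    proof (cases "J = {}")
      case True
      have "card (SLI {k} :: ('a^'n^'n) set) = card {A \<in> (SLI (insert k {}) :: ('a^'n^'n) set). column k A = axis k 1}"
      proof -
        have "{A \<in> (SLI (insert k {}) :: ('a^'n^'n) set). column k A = axis k 1} = SLI {k}"
        proof (auto)
          fix A :: "'a^'n^'n" assume A: "A \<in> SLI {k}"
          hence AM: "A \<in> MI {k}" and dA: "det A = 1" by (auto simp: SLI_def)
          have diag: "\<And>i j. i \<noteq> j \<Longrightarrow> A$i$j = 0"
          proof -
            fix i j :: 'n assume ij: "i \<noteq> j"
            hence "i \<notin> {k} \<or> j \<notin> {k}" by auto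
            thus "A$i$j = 0" using AM ij unfolding MI_def by auto
          qed
          have "det A = (\<Prod>i\<in>UNIV. A$i$i)" by (rule det_diagonal[OF diag])
          also have "\<dots> = A$k$k * (\<Prod>i\<in>UNIV-{k}. A$i$i)" by (subst prod.remove[of UNIV k]) auto
          also have "(\<Prod>i\<in>UNIV-{k}. A$i$i) = 1" using AM by (intro prod.neutral) (auto simp: MI_def)
          finally have "A$k$k = 1" using dA by simp
          thus "column k A = axis k 1" using diag by (auto simp: column_def axis_def vec_eq_iff)
        qed
        thus ?thesis by simp
      qed
      also have "\<dots> = 1" using Z2[of k "{}"] by (simp add: SLI_empty)
      finally show ?thesis using True by (simp add: binomial_eq_0)
    next
      case False
      then obtain m where mJ: "m \<in> J" by auto
      have mk: "m \<noteq> k" using mJ insert(2) by auto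
      obtain c where c: "card J = Suc c" using False insert(1) by (cases "card J") auto
      have "card (SLI (insert k J) :: ('a^'n^'n) set) =
             (CARD('a) ^ card (insert k J) - 1) * (CARD('a) ^ card J * card (SLI J :: ('a^'n^'n) set))"
        using Z3[of k "insert k J" m, where 'a='a] mJ mk Z2[OF insert(2), where 'a='a] by simp
      also have "\<dots> = (CARD('a) ^ Suc (card J) - 1) * (CARD('a) ^ card J *
              (CARD('a) ^ (card J choose 2) * (\<Prod>j=2..card J. CARD('a) ^ j - 1)))"
        using insert(1,2,3) False by simp
      also have "\<dots> = CARD('a) ^ (Suc (card J) choose 2) * (\<Prod>j=2..Suc (card J). CARD('a) ^ j - 1)"
      proof -
        have "Suc (card J) choose 2 = card J + (card J choose 2)" by (simp add: c numeral_2_eq_2)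
        moreover have "(\<Prod>j=2..Suc (card J). CARD('a) ^ j - 1) =
                        (\<Prod>j=2..card J. CARD('a) ^ j - 1) * (CARD('a) ^ Suc (card J) - 1)"
          by (simp add: c prod.nat_ivl_Suc')
        ultimately show ?thesis by (simp add: power_add mult_ac)
      qed
      finally show ?thesis using insert(1,2) by simp
    qed
  qed
qed

definition CS :: "nat \<Rightarrow> ('a::{field,finite}^'n::finite^'n) set set" where
  "CS i = {U. U \<subseteq> SL \<and> card U = i \<and> (\<Sum>g\<in>U. trace g) = 0}"

lemma finite_SL: "finite (SL :: ('a::{field,finite}^'n::finite^'n) set)" by simp

lemma weight_dist_CS: "weight_dist TYPE('a::{field,finite}^'n::finite^'n) i = card (CS i :: ('a^'n^'n) set set)"
proof -
  let ?f = "\<lambda>u::('a^'n^'n) \<Rightarrow> nat. {g\<in>SL. u g \<noteq> 0}"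
  have key: "(\<Sum>g\<in>SL. of_nat (u g) * trace g) = (\<Sum>g\<in>?f u. trace g)"
    if u: "\<forall>g. u g \<in> {0,1}" for u :: "('a^'n^'n) \<Rightarrow> nat"
  proof -
    have "(\<Sum>g\<in>SL. of_nat (u g) * trace g) = (\<Sum>g\<in>SL. if u g \<noteq> 0 then trace g else (0::'a))"
    proof (intro sum.cong refl)
      fix g show "of_nat (u g) * trace g = (if u g \<noteq> 0 then trace g else 0)" using u[rule_format, of g] by auto
    qed
    also have "\<dots> = (\<Sum>g\<in>?f u. trace g)" by (simp add: sum.inter_filter)
    finally show ?thesis .
  qed
  have "bij_betw ?f {u \<in> (SL_code :: (('a^'n^'n) \<Rightarrow> nat) set). hweight u = i} (CS i)"
  proof (rule bij_betwI')
    fix u v :: "('a^'n^'n) \<Rightarrow> nat"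
    assume u: "u \<in> {u \<in> SL_code. hweight u = i}" and v: "v \<in> {u \<in> SL_code. hweight u = i}"
    show "(?f u = ?f v) = (u = v)"
    proof
      assume e: "?f u = ?f v"
      show "u = v"
      proof
        fix g show "u g = v g"
        proof (cases "g \<in> SL")
          case True
          have "u g \<in> {0,1}" "v g \<in> {0,1}" using u v by (auto simp: SL_code_def)
          moreover have "(u g \<noteq> 0) = (v g \<noteq> 0)" using e True by blast
          ultimately show ?thesis by auto
        next
          case False thus ?thesis using u v by (auto simp: SL_code_def)
        qed
      qed
    qed simp
  next
    fix u assume u: "u \<in> {u \<in> (SL_code :: (('a^'n^'n) \<Rightarrow> nat) set). hweight u = i}"
    show "?f u \<in> CS i" using u key[of u] by (auto simp: CS_def SL_code_def hweight_def)
  next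
    fix U assume U: "U \<in> (CS i :: ('a^'n^'n) set set)"
    define u where "u = (\<lambda>g. if g \<in> U then 1 else 0 :: nat)"
    have fu: "?f u = U" using U by (auto simp: u_def CS_def)
    have u01: "\<forall>g. u g \<in> {0,1}" by (simp add: u_def)
    have "u \<in> SL_code" using U key[OF u01] fu u01 by (auto simp: SL_code_def CS_def u_def)
    moreover have "hweight u = i" using U fu by (simp add: hweight_def CS_def)
    ultimately show "\<exists>u\<in>{u \<in> SL_code. hweight u = i}. U = ?f u" using fu by auto
  qed
  thus ?thesis unfolding weight_dist_def by (rule bij_betw_same_card)
qed

definition cnt :: "('a::{field,finite}^'n::finite^'n) set \<Rightarrow> 'a \<Rightarrow> nat" where
  "cnt U = (\<lambda>\<beta>. card {g\<in>U. trace g = \<beta>})"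

definition Nu :: "nat \<Rightarrow> ('a::{field,finite} \<Rightarrow> nat) set" where
  "Nu i = {\<nu>. (\<Sum>\<beta>\<in>UNIV. \<nu> \<beta>) = i \<and> (\<Sum>\<beta>\<in>UNIV. of_nat (\<nu> \<beta>) * \<beta>) = 0}"

lemma card_cnt:
  fixes U :: "('a::{field,finite}^'n::finite^'n) set"
  shows "finite U \<Longrightarrow> card U = (\<Sum>\<beta>\<in>UNIV. cnt U \<beta>)"
proof -
  assume U: "finite U"
  have "(\<Sum>\<beta>\<in>UNIV. \<Sum>g\<in>{x. x \<in> U \<and> trace x = \<beta>}. (1::nat)) = (\<Sum>g\<in>U. 1)"
    by (rule sum.group) (use U in auto)
  thus ?thesis by (simp add: cnt_def)
qed

lemma sum_cnt:
  fixes U :: "('a::{field,finite}^'n::finite^'n) set"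
  shows "finite U \<Longrightarrow> (\<Sum>g\<in>U. trace g) = (\<Sum>\<beta>\<in>UNIV. of_nat (cnt U \<beta>) * \<beta>)"
proof -
  assume U: "finite U"
  have "(\<Sum>\<beta>\<in>UNIV. \<Sum>g\<in>{x. x \<in> U \<and> trace x = \<beta>}. trace g) = (\<Sum>g\<in>U. trace g)"
    by (rule sum.group) (use U in auto)
  moreover have "(\<Sum>g\<in>{x. x \<in> U \<and> trace x = \<beta>}. trace g) = of_nat (cnt U \<beta>) * \<beta>" for \<beta>
  proof -
    have "(\<Sum>g\<in>{x. x \<in> U \<and> trace x = \<beta>}. trace g) = (\<Sum>g\<in>{x. x \<in> U \<and> trace x = \<beta>}. \<beta>)"
      by (intro sum.cong refl) auto
    thus ?thesis by (simp add: cnt_def)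
  qed
  ultimately show ?thesis by (simp add: cnt_def)
qed

lemma finite_Nu: "finite (Nu i :: ('a::{field,finite} \<Rightarrow> nat) set)"
proof -
  have "Nu i \<subseteq> PiE UNIV (\<lambda>_::'a. {0..i})"
  proof
    fix \<nu> :: "'a \<Rightarrow> nat" assume "\<nu> \<in> Nu i"
    hence s: "(\<Sum>\<beta>\<in>UNIV. \<nu> \<beta>) = i" by (simp add: Nu_def)
    have "\<nu> \<beta> \<le> i" for \<beta> using member_le_sum[of \<beta> UNIV \<nu>] s by simp
    thus "\<nu> \<in> PiE UNIV (\<lambda>_. {0..i})" by (simp add: PiE_UNIV_domain)
  qed
  moreover have "finite (PiE UNIV (\<lambda>_::'a. {0..i}))" by (rule finite_PiE) auto
  ultimately show ?thesis by (rule finite_subset)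
qed

lemma card_fix_cnt:
  "card {U. U \<subseteq> (SL :: ('a::{field,finite}^'n::finite^'n) set) \<and> cnt U = \<nu>} =
     (\<Prod>\<beta>\<in>UNIV. card {g \<in> (SL :: ('a^'n^'n) set). trace g = \<beta>} choose \<nu> \<beta>)"
proof -
  let ?T = "\<lambda>\<beta>. {g \<in> (SL :: ('a^'n^'n) set). trace g = \<beta>}"
  let ?P = "PiE UNIV (\<lambda>\<beta>. {S. S \<subseteq> ?T \<beta> \<and> card S = \<nu> \<beta>})"
  have "bij_betw (\<lambda>U \<beta>. {g\<in>U. trace g = \<beta>}) {U. U \<subseteq> SL \<and> cnt U = \<nu>} ?P"
  proof (rule bij_betwI')
    fix U V assume "U \<in> {U. U \<subseteq> (SL :: ('a^'n^'n) set) \<and> cnt U = \<nu>}" "V \<in> {U. U \<subseteq> (SL :: ('a^'n^'n) set) \<and> cnt U = \<nu>}"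
    show "((\<lambda>\<beta>. {g\<in>U. trace g = \<beta>}) = (\<lambda>\<beta>. {g\<in>V. trace g = \<beta>})) = (U = V)"
    proof
      assume e: "(\<lambda>\<beta>. {g\<in>U. trace g = \<beta>}) = (\<lambda>\<beta>. {g\<in>V. trace g = \<beta>})"
      show "U = V"
      proof (rule set_eqI)
        fix g show "(g \<in> U) = (g \<in> V)" using fun_cong[OF e, of "trace g"] by blast
      qed
    qed simp
  next
    fix U assume "U \<in> {U. U \<subseteq> (SL :: ('a^'n^'n) set) \<and> cnt U = \<nu>}"
    thus "(\<lambda>\<beta>. {g\<in>U. trace g = \<beta>}) \<in> ?P" by (auto simp: PiE_UNIV_domain cnt_def)
  next
    fix F assume F: "F \<in> ?P"
    define U where "U = (\<Union>\<beta>. F \<beta>)"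
    have FT: "F \<beta> \<subseteq> ?T \<beta>" and cF: "card (F \<beta>) = \<nu> \<beta>" for \<beta> using F by (auto simp: PiE_UNIV_domain)
    have eq: "{g\<in>U. trace g = \<beta>} = F \<beta>" for \<beta> using FT by (auto simp: U_def)
    have "U \<subseteq> SL" using FT by (auto simp: U_def)
    moreover have "cnt U = \<nu>" using eq cF by (simp add: cnt_def fun_eq_iff)
    ultimately show "\<exists>U\<in>{U. U \<subseteq> SL \<and> cnt U = \<nu>}. F = (\<lambda>\<beta>. {g\<in>U. trace g = \<beta>})"
      using eq by (intro bexI[of _ U]) (auto simp: fun_eq_iff)
  qed
  hence "card {U. U \<subseteq> (SL :: ('a^'n^'n) set) \<and> cnt U = \<nu>} = card ?P" by (rule bij_betw_same_card)
  also have "\<dots> = (\<Prod>\<beta>\<in>UNIV. card {S. S \<subseteq> ?T \<beta> \<and> card S = \<nu> \<beta>})" by (simp add: card_PiE)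
  also have "\<dots> = (\<Prod>\<beta>\<in>UNIV. card (?T \<beta>) choose \<nu> \<beta>)" by (simp add: n_subsets)
  finally show ?thesis .
qed

lemma CS_formula:
  "card (CS i :: ('a::{field,finite}^'n::finite^'n) set set) =
     (\<Sum>\<nu>\<in>Nu i. \<Prod>\<beta>\<in>UNIV. card {g \<in> (SL :: ('a^'n^'n) set). trace g = \<beta>} choose \<nu> \<beta>)"
proof -
  let ?S = "{U. U \<subseteq> (SL :: ('a^'n^'n) set) \<and> cnt U \<in> Nu i}"
  have CSeq: "CS i = ?S"
  proof -
    have "U \<subseteq> SL \<Longrightarrow> (card U = i \<and> (\<Sum>g\<in>U. trace g) = 0) = (cnt U \<in> Nu i)" for U :: "('a^'n^'n) set"
      using card_cnt[of U] sum_cnt[of U] finite_subset[OF _ finite_SL] by (auto simp: Nu_def)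
    thus ?thesis by (auto simp: CS_def)
  qed
  have fS: "finite ?S" by simp
  have "(\<Sum>\<nu>\<in>Nu i. \<Sum>U\<in>{x. x \<in> ?S \<and> cnt x = \<nu>}. (1::nat)) = (\<Sum>U\<in>?S. 1)"
    by (rule sum.group[OF fS finite_Nu]) auto
  hence "card ?S = (\<Sum>\<nu>\<in>Nu i. card {x. x \<in> ?S \<and> cnt x = \<nu>})" by simp
  also have "\<dots> = (\<Sum>\<nu>\<in>Nu i. card {U. U \<subseteq> (SL :: ('a^'n^'n) set) \<and> cnt U = \<nu>})"
    by (intro sum.cong refl arg_cong[where f=card]) auto
  finally show ?thesis unfolding CSeq card_fix_cnt .
qed

lemma P_Suc: "fact (Suc t) * (w choose Suc t) = fact t * (w choose t) * (w - t)"
proof (cases "Suc t \<le> w")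
  case True
  have a: "fact (Suc t) * fact (w - Suc t) * (w choose Suc t) = (fact w :: nat)" by (rule binomial_fact_lemma[OF True])
  have b: "fact t * fact (w - t) * (w choose t) = (fact w :: nat)" using True by (intro binomial_fact_lemma) simp
  have wt: "w - t = Suc (w - Suc t)" using True by simp
  have c: "fact (w - t) = (w - t) * (fact (w - Suc t) :: nat)"
    unfolding wt by (simp only: fact_Suc of_nat_id)
  have "fact (Suc t) * (w choose Suc t) * fact (w - Suc t) = fact t * (w choose t) * (w - t) * (fact (w - Suc t) :: nat)"
  proof -
    have "fact (Suc t) * (w choose Suc t) * fact (w - Suc t) = (fact w :: nat)" using a by (simp only: mult_ac)
    also have "\<dots> = fact t * (w choose t) * ((w - t) * fact (w - Suc t))" using b c by (simp only: mult_ac)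
    finally show ?thesis by (simp only: mult_ac)
  qed
  moreover have "(fact (w - Suc t) :: nat) \<noteq> 0" by simp
  ultimately show ?thesis by (metis mult_right_cancel)
next
  case False thus ?thesis by simp
qed

lemma w_P: "w * (fact t * (w choose t)) = fact (Suc t) * (w choose Suc t) + t * (fact t * (w choose t) :: nat)"
proof (cases "t \<le> w")
  case True
  let ?X = "fact t * (w choose t) :: nat"
  have "(w - t) * ?X + t * ?X = ((w - t) + t) * ?X" by (rule add_mult_distrib[symmetric])
  also have "\<dots> = w * ?X" using True by simp
  finally have "w * ?X = ?X * (w - t) + t * ?X" by (simp only: mult.commute)
  thus ?thesis by (simp only: P_Suc)
next
  case False
  hence z: "w choose t = 0" "w choose Suc t = 0" by simp_all
  show ?thesis by (simp only: z mult_zero_right add_0_right)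
qed

lemma stirling_power: "(w::nat) ^ h = (\<Sum>t\<le>h. Stirling h t * (fact t * (w choose t)))"
proof (induction h)
  case 0 then show ?case by simp
next
  case (Suc h)
  define P where "P = (\<lambda>t. fact t * (w choose t) :: nat)"
  have IH: "w ^ h = (\<Sum>t\<le>h. Stirling h t * P t)" using Suc.IH by (simp add: P_def)
  have wP: "w * P t = P (Suc t) + t * P t" for t unfolding P_def by (rule w_P)
  have "w ^ Suc h = w * (\<Sum>t\<le>h. Stirling h t * P t)" by (simp only: power_Suc IH)
  also have "\<dots> = (\<Sum>t\<le>h. Stirling h t * (w * P t))" by (simp add: sum_distrib_left mult.left_commute)
  also have "\<dots> = (\<Sum>t\<le>h. Stirling h t * P (Suc t) + t * Stirling h t * P t)"
    by (intro sum.cong refl) (simp add: wP distrib_left mult.left_commute)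
  also have "\<dots> = (\<Sum>t\<le>h. Stirling h t * P (Suc t)) + (\<Sum>t\<le>h. t * Stirling h t * P t)"
    by (rule sum.distrib)
  also have "(\<Sum>t\<le>h. t * Stirling h t * P t) = (\<Sum>t\<le>h. Suc t * Stirling h (Suc t) * P (Suc t))"
  proof -
    have "(\<Sum>t\<le>Suc h. t * Stirling h t * P t) = 0 * Stirling h 0 * P 0 + (\<Sum>t\<le>h. Suc t * Stirling h (Suc t) * P (Suc t))"
      by (rule sum.atMost_Suc_shift)
    moreover have "(\<Sum>t\<le>Suc h. t * Stirling h t * P t) = (\<Sum>t\<le>h. t * Stirling h t * P t)" by simp
    ultimately show ?thesis by simp
  qed
  also have "(\<Sum>t\<le>h. Stirling h t * P (Suc t)) + (\<Sum>t\<le>h. Suc t * Stirling h (Suc t) * P (Suc t)) =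
             (\<Sum>t\<le>h. Stirling (Suc h) (Suc t) * P (Suc t))"
    unfolding sum.distrib[symmetric] by (intro sum.cong refl) (simp add: distrib_right)
  also have "\<dots> = (\<Sum>t\<le>Suc h. Stirling (Suc h) t * P t)"
  proof -
    have "(\<Sum>t\<le>Suc h. Stirling (Suc h) t * P t) = Stirling (Suc h) 0 * P 0 + (\<Sum>t\<le>h. Stirling (Suc h) (Suc t) * P (Suc t))"
      by (rule sum.atMost_Suc_shift)
    thus ?thesis by (simp only: Stirling.simps mult_zero_left add_0_left)
  qed
  finally show ?case by (simp add: P_def)
qed


definition scal :: "'a::field \<Rightarrow> 'a^'n::finite^'n \<Rightarrow> 'a^'n^'n" where
  "scal a g = (\<chi> i j. a * g$i$j)"

lemma det_scal: "det (scal a g) = a ^ CARD('n) * det (g :: 'a::field^'n::finite^'n)"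
proof -
  have "scal a g = (\<chi> i. (\<lambda>_. a) i *s g$i)" by (simp add: scal_def vec_eq_iff)
  hence "det (scal a g) = (\<Prod>i\<in>(UNIV::'n set). a) * det (\<chi> i. g$i)" by (simp add: det_rows_mul)
  thus ?thesis by simp
qed

lemma trace_scal: "trace (scal a g) = a * trace (g :: 'a::field^'n::finite^'n)"
  by (simp add: scal_def trace_def sum_distrib_left)

lemma scal_scal: "a \<noteq> 0 \<Longrightarrow> scal (inverse a) (scal a g) = (g :: 'a::field^'n::finite^'n)"
  by (simp add: scal_def vec_eq_iff)

definition Wa :: "nat \<Rightarrow> 'a::{field,finite} \<Rightarrow> ('a^'n::finite^'n) set" where
  "Wa r a = {g \<in> SL. add_char r (a * trace g) = -1}"

definition Bt :: "'a::{field,finite} itself \<Rightarrow> nat \<Rightarrow> 'n::finite itself \<Rightarrow> int" where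
  "Bt _ t _ = (\<Sum>T\<in>{T. T \<subseteq> (SL :: ('a^'n^'n) set) \<and> card T = t}.
      \<Sum>U\<in>Pow T. if (\<Sum>g\<in>U. trace g) = 0 then (-1) ^ card U else 0)"

context
  fixes r :: nat
  assumes card2: "CARD('a::{field,finite}) = 2^r" and rpos: "r > 0"
begin

lemma SL_char:
  assumes a: "(a::'a) \<noteq> 0"
  shows "(\<Sum>g\<in>(SL :: ('a^'n::finite^'n) set). add_char r (a * trace g)) =
     int (2^r) ^ (CARD('n) choose 2) * kloosterman r (CARD('n) - 1) (a ^ CARD('n))"
proof -
  have ap: "a ^ CARD('n) \<noteq> 0" using a by simp
  have bij: "bij_betw (scal a) (SL :: ('a^'n^'n) set) {A. det A = a ^ CARD('n)}"
  proof (rule bij_betwI[where g="scal (inverse a)"])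
    show "scal a \<in> (SL :: ('a^'n^'n) set) \<rightarrow> {A. det A = a ^ CARD('n)}" by (auto simp: SL_def det_scal)
    show "scal (inverse a) \<in> {A. det A = a ^ CARD('n)} \<rightarrow> (SL :: ('a^'n^'n) set)"
      using ap by (auto simp: SL_def det_scal power_inverse)
    show "scal (inverse a) (scal a g) = g" for g :: "'a^'n^'n" using a by (rule scal_scal)
    show "scal a (scal (inverse a) g) = g" for g :: "'a^'n^'n"
      using scal_scal[of "inverse a" g] a by simp
  qed
  have "(\<Sum>g\<in>(SL :: ('a^'n^'n) set). add_char r (a * trace g)) = (\<Sum>g\<in>(SL :: ('a^'n^'n) set). add_char r (trace (scal a g)))"
    by (simp add: trace_scal)
  also have "\<dots> = (\<Sum>A\<in>{A. det A = a ^ CARD('n)}. add_char r (trace (A :: 'a^'n^'n)))"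
    by (rule sum.reindex_bij_betw[OF bij])
  also have "\<dots> = (\<Sum>A\<in>(UNIV::('a^'n^'n) set). if det A = a ^ CARD('n) then add_char r (trace A) else 0)"
    by (simp add: sum.If_cases Collect_conv_if)
  also have "\<dots> = int (2^r) ^ (CARD('n) choose 2) * kloosterman r (CARD('n) - 1) (a ^ CARD('n))"
    by (rule SS_UNIV[OF card2 rpos])
  finally show ?thesis .
qed

lemma lam_sum_prod: "finite U \<Longrightarrow> add_char r (\<Sum>g\<in>U. f g :: 'a) = (\<Prod>g\<in>U. add_char r (f g))"
  by (induction U rule: finite_induct) (simp_all add: lam_add[OF card2 rpos] lam_0[OF card2 rpos])

lemma prod_one_minus:
  assumes T: "finite T"
  shows "(\<Prod>g\<in>T. 1 - add_char r (a * trace g)) =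
     (\<Sum>U\<in>Pow T. (-1) ^ card U * add_char r (a * (\<Sum>g\<in>U. trace (g :: 'a^'n::finite^'n))))"
proof -
  have "(\<Prod>g\<in>T. 1 - add_char r (a * trace g)) = (\<Prod>g\<in>T. (- add_char r (a * trace g)) + 1)" by simp
  also have "\<dots> = (\<Sum>U\<in>Pow T. (\<Prod>g\<in>U. - add_char r (a * trace g)) * (\<Prod>g\<in>T-U. 1))"
    by (rule prod_add[OF T])
  also have "\<dots> = (\<Sum>U\<in>Pow T. (-1) ^ card U * add_char r (a * (\<Sum>g\<in>U. trace g)))"
  proof (intro sum.cong refl)
    fix U assume "U \<in> Pow T"
    hence U: "finite U" using T finite_subset by auto
    have "(\<Prod>g\<in>U. - add_char r (a * trace g)) = (\<Prod>g\<in>U. (-1) * add_char r (a * trace g))" by simp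
    also have "\<dots> = (-1) ^ card U * (\<Prod>g\<in>U. add_char r (a * trace g))" by (simp only: prod.distrib prod_constant)
    also have "(\<Prod>g\<in>U. add_char r (a * trace g)) = add_char r (a * (\<Sum>g\<in>U. trace g))"
      by (simp add: lam_sum_prod[OF U] sum_distrib_left)
    finally show "(\<Prod>g\<in>U. - add_char r (a * trace g)) * (\<Prod>g\<in>T-U. 1) =
       (-1) ^ card U * add_char r (a * (\<Sum>g\<in>U. trace g))" by simp
  qed
  finally show ?thesis .
qed


lemma prod_indicator:
  assumes T: "T \<subseteq> (SL :: ('a^'n::finite^'n) set)"
  shows "(\<Prod>g\<in>T. 1 - add_char r (a * trace g)) = (if T \<subseteq> Wa r a then 2 ^ card T else 0)"
proof (cases "T \<subseteq> Wa r a")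
  case True
  have "(\<Prod>g\<in>T. 1 - add_char r (a * trace g)) = (\<Prod>g\<in>T. 2)"
    using True by (intro prod.cong refl) (auto simp: Wa_def)
  thus ?thesis using True by simp
next
  case False
  then obtain g where g: "g \<in> T" "g \<notin> Wa r a" by auto
  hence "add_char r (a * trace g) = 1" using T lam_pm[OF card2 rpos, of "a * trace g"] by (auto simp: Wa_def)
  hence "(\<Prod>g\<in>T. 1 - add_char r (a * trace g)) = 0" using g(1) by (intro prod_zero) auto
  thus ?thesis using False by simp
qed

lemma choose_sum:
  "int (2^t) * int (card (Wa r a :: ('a^'n::finite^'n) set) choose t) =
    (\<Sum>T\<in>{T. T \<subseteq> (SL :: ('a^'n^'n) set) \<and> card T = t}. \<Prod>g\<in>T. 1 - add_char r (a * trace g))"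
proof -
  let ?X = "{T. T \<subseteq> (SL :: ('a^'n^'n) set) \<and> card T = t}"
  have WS: "Wa r a \<subseteq> SL" by (auto simp: Wa_def)
  have "(\<Sum>T\<in>?X. \<Prod>g\<in>T. 1 - add_char r (a * trace g)) = (\<Sum>T\<in>?X. if T \<subseteq> Wa r a then 2 ^ t else 0)"
    by (intro sum.cong refl) (auto simp: prod_indicator)
  also have "\<dots> = (\<Sum>T\<in>{T \<in> ?X. T \<subseteq> Wa r a}. 2 ^ t)" by (rule sum.inter_filter[symmetric]) simp
  also have "{T \<in> ?X. T \<subseteq> Wa r a} = {T. T \<subseteq> (Wa r a :: ('a^'n^'n) set) \<and> card T = t}" using WS by auto
  also have "(\<Sum>T\<in>{T. T \<subseteq> (Wa r a :: ('a^'n^'n) set) \<and> card T = t}. (2::int) ^ t) =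
       of_nat (card (Wa r a :: ('a^'n^'n) set) choose t) * 2 ^ t" by (simp add: n_subsets)
  finally show ?thesis by simp
qed

lemma sum_a_choose:
  "(\<Sum>a\<in>UNIV. int (2^t) * int (card (Wa r a :: ('a^'n::finite^'n) set) choose t)) = int (2^r) * Bt TYPE('a) t TYPE('n)"
proof -
  let ?X = "{T. T \<subseteq> (SL :: ('a^'n^'n) set) \<and> card T = t}"
  have "(\<Sum>a\<in>UNIV. int (2^t) * int (card (Wa r a :: ('a^'n^'n) set) choose t)) =
    (\<Sum>a\<in>UNIV. \<Sum>T\<in>?X. \<Sum>U\<in>Pow T. (-1) ^ card U * add_char r (a * (\<Sum>g\<in>U. trace g)))"
  proof (intro sum.cong refl)
    fix a :: 'a
    have "int (2^t) * int (card (Wa r a :: ('a^'n^'n) set) choose t) =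
       (\<Sum>T\<in>?X. \<Prod>g\<in>T. 1 - add_char r (a * trace g))" by (rule choose_sum)
    also have "\<dots> = (\<Sum>T\<in>?X. \<Sum>U\<in>Pow T. (-1) ^ card U * add_char r (a * (\<Sum>g\<in>U. trace g)))"
      by (intro sum.cong refl prod_one_minus) (auto intro: finite_subset)
    finally show "int (2^t) * int (card (Wa r a :: ('a^'n^'n) set) choose t) =
       (\<Sum>T\<in>?X. \<Sum>U\<in>Pow T. (-1) ^ card U * add_char r (a * (\<Sum>g\<in>U. trace g)))" .
  qed
  also have "\<dots> = (\<Sum>T\<in>?X. \<Sum>U\<in>Pow T. (-1) ^ card U * (\<Sum>a\<in>UNIV. add_char r (a * (\<Sum>g\<in>U. trace g))))"
    by (subst sum.swap) (simp add: sum.swap[of _ UNIV] sum_distrib_left)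
  also have "\<dots> = (\<Sum>T\<in>?X. \<Sum>U\<in>Pow T. int (2^r) * (if (\<Sum>g\<in>U. trace g) = 0 then (-1) ^ card U else 0))"
    by (intro sum.cong refl) (simp add: lam_orth[OF card2 rpos])
  also have "\<dots> = int (2^r) * Bt TYPE('a) t TYPE('n)" by (simp add: Bt_def sum_distrib_left)
  finally show ?thesis .
qed

end


lemma cnt_sup:
  fixes S U :: "'b set"
  assumes S: "finite S" and U: "U \<subseteq> S"
  shows "card {T. (T \<subseteq> S \<and> card T = t) \<and> U \<subseteq> T} =
          (if card U \<le> t then (card S - card U) choose (t - card U) else 0)"
proof (cases "card U \<le> t")
  case True
  have fU: "finite U" using S U finite_subset by auto
  have "bij_betw (\<lambda>T. T - U) {T. (T \<subseteq> S \<and> card T = t) \<and> U \<subseteq> T} {V. V \<subseteq> S - U \<and> card V = t - card U}"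
  proof (rule bij_betwI[where g="\<lambda>V. V \<union> U"])
    show "(\<lambda>T. T - U) \<in> {T. (T \<subseteq> S \<and> card T = t) \<and> U \<subseteq> T} \<rightarrow> {V. V \<subseteq> S - U \<and> card V = t - card U}"
      using fU by (auto simp: card_Diff_subset)
    show "(\<lambda>V. V \<union> U) \<in> {V. V \<subseteq> S - U \<and> card V = t - card U} \<rightarrow> {T. (T \<subseteq> S \<and> card T = t) \<and> U \<subseteq> T}"
    proof
      fix V assume V: "V \<in> {V. V \<subseteq> S - U \<and> card V = t - card U}"
      have fV: "finite V" using V S finite_subset by auto
      have "card (V \<union> U) = card V + card U" using V fV fU by (intro card_Un_disjoint) auto
      thus "V \<union> U \<in> {T. (T \<subseteq> S \<and> card T = t) \<and> U \<subseteq> T}" using V U True by auto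
    qed
  qed auto
  hence "card {T. (T \<subseteq> S \<and> card T = t) \<and> U \<subseteq> T} = card {V. V \<subseteq> S - U \<and> card V = t - card U}"
    by (rule bij_betw_same_card)
  also have "\<dots> = card (S - U) choose (t - card U)" by (rule n_subsets) (use S in auto)
  finally show ?thesis using True U S by (simp add: card_Diff_subset fU)
next
  case False
  have e: "{T. (T \<subseteq> S \<and> card T = t) \<and> U \<subseteq> T} = {}"
  proof (rule ccontr)
    assume "{T. (T \<subseteq> S \<and> card T = t) \<and> U \<subseteq> T} \<noteq> {}"
    then obtain T where "T \<subseteq> S" "card T = t" "U \<subseteq> T" by auto
    hence "card U \<le> t" using S by (metis card_mono finite_subset)
    thus False using False by simp
  qed
  thus ?thesis unfolding e using False by simp
qed

context
  fixes r :: nat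
  assumes card2: "CARD('a::{field,finite}) = 2^r" and rpos: "r > 0"
begin

lemma Bt_formula:
  "Bt TYPE('a) t TYPE('n::finite) = (\<Sum>i\<in>{0..card (SL :: ('a^'n^'n) set)}. (-1) ^ i * int (card (CS i :: ('a^'n^'n) set set)) *
       (if i \<le> t then int ((card (SL :: ('a^'n^'n) set) - i) choose (t - i)) else 0))"
proof -
  let ?S = "SL :: ('a^'n^'n) set"
  let ?N = "card ?S"
  let ?X = "{T. T \<subseteq> ?S \<and> card T = t}"
  let ?f = "\<lambda>U::('a^'n^'n) set. if (\<Sum>g\<in>U. trace g) = 0 then (-1::int) ^ card U else 0"
  let ?c = "\<lambda>i. if i \<le> t then int ((?N - i) choose (t - i)) else 0"
  have fS: "finite ?S" by simp
  have "Bt TYPE('a) t TYPE('n) = (\<Sum>T\<in>?X. \<Sum>U\<in>{U \<in> Pow ?S. U \<subseteq> T}. ?f U)"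
  proof (unfold Bt_def, rule sum.cong[OF refl])
    fix T assume "T \<in> ?X"
    hence "Pow T = {U \<in> Pow ?S. U \<subseteq> T}" by auto
    thus "(\<Sum>U\<in>Pow T. ?f U) = (\<Sum>U\<in>{U \<in> Pow ?S. U \<subseteq> T}. ?f U)" by simp
  qed
  also have "\<dots> = (\<Sum>U\<in>Pow ?S. \<Sum>T\<in>{T \<in> ?X. U \<subseteq> T}. ?f U)"
    by (rule sum.swap_restrict) simp_all
  also have "\<dots> = (\<Sum>U\<in>Pow ?S. ?f U * ?c (card U))"
  proof (intro sum.cong refl)
    fix U assume "U \<in> Pow ?S"
    hence "card {T \<in> ?X. U \<subseteq> T} = (if card U \<le> t then (?N - card U) choose (t - card U) else 0)"
      using cnt_sup[OF fS, of U t] by simp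
    thus "(\<Sum>T\<in>{T \<in> ?X. U \<subseteq> T}. ?f U) = ?f U * ?c (card U)" by simp
  qed
  also have "\<dots> = (\<Sum>i\<in>{0..?N}. \<Sum>U\<in>{U. U \<in> Pow ?S \<and> card U = i}. ?f U * ?c (card U))"
    by (rule sum.group[symmetric]) (auto simp: card_mono)
  also have "\<dots> = (\<Sum>i\<in>{0..?N}. (-1) ^ i * int (card (CS i :: ('a^'n^'n) set set)) * ?c i)"
  proof (intro sum.cong refl)
    fix i
    have "(\<Sum>U\<in>{U. U \<in> Pow ?S \<and> card U = i}. ?f U * ?c (card U)) =
          (\<Sum>U\<in>{U. U \<in> Pow ?S \<and> card U = i}. if (\<Sum>g\<in>U. trace g) = 0 then (-1) ^ i * ?c i else 0)"
      by (intro sum.cong refl) auto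
    also have "\<dots> = (\<Sum>U\<in>{U \<in> {U. U \<in> Pow ?S \<and> card U = i}. (\<Sum>g\<in>U. trace g) = 0}. (-1) ^ i * ?c i)"
      by (rule sum.inter_filter[symmetric]) simp
    also have "{U \<in> {U. U \<in> Pow ?S \<and> card U = i}. (\<Sum>g\<in>U. trace g) = 0} = CS i"
      by (auto simp: CS_def)
    finally show "(\<Sum>U\<in>{U. U \<in> Pow ?S \<and> card U = i}. ?f U * ?c (card U)) =
          (-1) ^ i * int (card (CS i :: ('a^'n^'n) set set)) * ?c i" by simp
  qed
  finally show ?thesis .
qed

lemma two_w:
  "int (2 * card (Wa r a :: ('a^'n::finite^'n) set)) =
     int (card (SL :: ('a^'n^'n) set)) - (\<Sum>g\<in>(SL :: ('a^'n^'n) set). add_char r (a * trace g))"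
proof -
  let ?S = "SL :: ('a^'n^'n) set"
  have "(\<Sum>g\<in>?S. add_char r (a * trace g)) = (\<Sum>g\<in>?S. 1 - 2 * (if g \<in> Wa r a then 1 else 0))"
  proof (intro sum.cong refl)
    fix g assume "g \<in> ?S"
    thus "add_char r (a * trace g) = 1 - 2 * (if g \<in> Wa r a then 1 else 0)"
      using lam_pm[OF card2 rpos, of "a * trace g"] by (auto simp: Wa_def)
  qed
  also have "\<dots> = int (card ?S) - 2 * (\<Sum>g\<in>?S. if g \<in> Wa r a then 1 else 0)"
    by (simp add: sum_subtractf sum_distrib_left)
  also have "(\<Sum>g\<in>?S. if g \<in> Wa r a then 1 else (0::int)) = int (card (Wa r a :: ('a^'n^'n) set))"
  proof -
    have "(\<Sum>g\<in>?S. if g \<in> Wa r a then 1 else (0::int)) = (\<Sum>g\<in>{g \<in> ?S. g \<in> Wa r a}. 1)"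
      by (rule sum.inter_filter[symmetric]) simp
    also have "{g \<in> ?S. g \<in> Wa r a} = Wa r a" by (auto simp: Wa_def)
    finally show ?thesis by simp
  qed
  finally show ?thesis by simp
qed

end

context
  fixes r s :: nat
  assumes card2: "CARD('a::{field,finite}) = 2^r" and rpos: "r > 0"
    and cardn: "CARD('n::finite) = 2^s" and spos: "s > 0"
begin


lemma rearr:
  fixes F G :: "nat \<Rightarrow> int"
  shows "(\<Sum>t\<le>h. F t * (\<Sum>i\<in>{0..M}. G i * (if i \<le> t then int ((M - i) choose (t - i)) else 0))) =
         (\<Sum>i=0..min M h. G i * (\<Sum>t=i..h. F t * (if t \<le> M then int ((M - i) choose (M - t)) else 0)))"
proof -
  have bin: "int ((M - i) choose (t - i)) = (if t \<le> M then int ((M - i) choose (M - t)) else 0)"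
    if "i \<le> t" "i \<le> M" for i t
  proof (cases "t \<le> M")
    case True
    have "(M - i) choose (t - i) = (M - i) choose ((M - i) - (t - i))"
      using True that by (intro binomial_symmetric) simp
    also have "(M - i) - (t - i) = M - t" using True that by simp
    finally show ?thesis using True by simp
  next
    case False
    hence "M - i < t - i" using that by arith
    thus ?thesis using False by simp
  qed
  have "(\<Sum>t\<le>h. F t * (\<Sum>i\<in>{0..M}. G i * (if i \<le> t then int ((M - i) choose (t - i)) else 0))) =
        (\<Sum>i\<in>{0..M}. \<Sum>t\<le>h. G i * (if i \<le> t then F t * int ((M - i) choose (t - i)) else 0))"
    by (subst sum.swap) (simp add: sum_distrib_left mult_ac if_distrib cong: if_cong)
  also have "\<dots> = (\<Sum>i\<in>{0..M}. G i * (\<Sum>t=i..h. F t * (if t \<le> M then int ((M - i) choose (M - t)) else 0)))"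
  proof (intro sum.cong refl)
    fix i assume iM: "i \<in> {0..M}"
    have "(\<Sum>t\<le>h. G i * (if i \<le> t then F t * int ((M - i) choose (t - i)) else 0)) =
          G i * (\<Sum>t\<le>h. if i \<le> t then F t * int ((M - i) choose (t - i)) else 0)"
      by (simp add: sum_distrib_left)
    also have "(\<Sum>t\<le>h. if i \<le> t then F t * int ((M - i) choose (t - i)) else 0) =
               (\<Sum>t\<in>{t \<in> {..h}. i \<le> t}. F t * int ((M - i) choose (t - i)))"
      by (rule sum.inter_filter[symmetric]) simp
    also have "{t \<in> {..h}. i \<le> t} = {i..h}" by auto
    also have "(\<Sum>t\<in>{i..h}. F t * int ((M - i) choose (t - i))) =
               (\<Sum>t=i..h. F t * (if t \<le> M then int ((M - i) choose (M - t)) else 0))"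
      using iM by (intro sum.cong refl) (simp add: bin)
    finally show "(\<Sum>t\<le>h. G i * (if i \<le> t then F t * int ((M - i) choose (t - i)) else 0)) =
       G i * (\<Sum>t=i..h. F t * (if t \<le> M then int ((M - i) choose (M - t)) else 0))" .
  qed
  also have "\<dots> = (\<Sum>i=0..min M h. G i * (\<Sum>t=i..h. F t * (if t \<le> M then int ((M - i) choose (M - t)) else 0)))"
    by (rule sum.mono_neutral_right) auto
  finally show ?thesis .
qed

lemma n_ge2: "CARD('n) \<ge> 2"
proof -
  have "(2::nat)^1 \<le> 2^s" using spos by (intro power_increasing) auto
  thus ?thesis using cardn by simp
qed

lemma n_even: "even (CARD('n) - 2)"
proof -
  have "even ((2::nat)^s)" using spos by simp
  thus ?thesis using cardn n_ge2 by simp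
qed

lemma sum_twist_pow:
  "(\<Sum>a\<in>UNIV-{0}. add_char r (a * \<beta>) * kloosterman r (CARD('n) - 1) (a ^ CARD('n))) =
     (if \<beta> = 0 then 0 else int (2^r) * kloosterman r (CARD('n) - 2) (inverse \<beta>)) + 1"
  for \<beta> :: 'a
proof -
  let ?n = "CARD('n)"
  let ?K = "kloosterman r (?n - 1)"
  have "(\<Sum>a\<in>UNIV-{0}. add_char r (a * \<beta>) * ?K (a ^ ?n)) =
        (\<Sum>a\<in>UNIV-{0}. add_char r (a^(2^s) * \<beta>^(2^s)) * ?K (a ^ (2^s)))"
  proof (intro sum.cong refl)
    fix a :: 'a
    have "add_char r (a * \<beta>) = add_char r ((a * \<beta>)^(2^s))" by (rule lam_pow2s[OF card2 rpos, symmetric])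
    thus "add_char r (a * \<beta>) * ?K (a ^ ?n) = add_char r (a^(2^s) * \<beta>^(2^s)) * ?K (a ^ (2^s))"
      by (simp add: cardn power_mult_distrib)
  qed
  also have "\<dots> = (\<Sum>b\<in>UNIV-{0}. add_char r (b * \<beta>^(2^s)) * ?K b)"
    using sum.reindex_bij_betw[OF pow2s_bij_nz[OF card2 rpos, of s], of "\<lambda>b. add_char r (b * \<beta>^(2^s)) * ?K b"]
    by simp
  also have "?n - 1 = Suc (?n - 2)" using n_ge2 by simp
  hence "(\<Sum>b\<in>UNIV-{0}. add_char r (b * \<beta>^(2^s)) * ?K b) =
     (if \<beta>^(2^s) = 0 then 0 else int (2^r) * kloosterman r (?n - 2) (inverse (\<beta>^(2^s)))) + (-1)^(?n - 2)"
    using K_twist[OF card2 rpos, of "\<beta>^(2^s)" "?n - 2"] by simp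
  also have "(-1::int)^(?n - 2) = 1" using n_even by simp
  also have "kloosterman r (?n - 2) (inverse (\<beta>^(2^s))) = kloosterman r (?n - 2) (inverse \<beta>)"
    by (simp only: power_inverse[symmetric] K_pow2s[OF card2 rpos])
  finally show ?thesis by simp
qed

lemma nb_mult:
  "int (card {g \<in> (SL :: ('a^'n^'n) set). trace g = \<beta>}) * int (2^r) =
     int (card (SL :: ('a^'n^'n) set)) + int (2^r) ^ (CARD('n) choose 2) * (int (2^r) * theta r (CARD('n)) \<beta> + 1)"
proof -
  let ?S = "SL :: ('a^'n^'n) set"
  let ?n = "CARD('n)"
  have "int (card {g \<in> ?S. trace g = \<beta>}) * int (2^r) = (\<Sum>g\<in>?S. if trace g - \<beta> = 0 then int (2^r) else 0)"
  proof -
    have "(\<Sum>g\<in>?S. if trace g - \<beta> = 0 then int (2^r) else 0) = (\<Sum>g\<in>{g \<in> ?S. trace g - \<beta> = 0}. int (2^r))"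
      by (rule sum.inter_filter[symmetric]) simp
    also have "{g \<in> ?S. trace g - \<beta> = 0} = {g \<in> ?S. trace g = \<beta>}" by auto
    finally show ?thesis by simp
  qed
  also have "\<dots> = (\<Sum>g\<in>?S. \<Sum>a\<in>UNIV. add_char r (a * (trace g - \<beta>)))"
    by (simp add: lam_orth[OF card2 rpos])
  also have "\<dots> = (\<Sum>a\<in>UNIV. \<Sum>g\<in>?S. add_char r (a * (trace g - \<beta>)))" by (rule sum.swap)
  also have "\<dots> = (\<Sum>g\<in>?S. add_char r (0 * (trace g - \<beta>))) + (\<Sum>a\<in>UNIV-{0}. \<Sum>g\<in>?S. add_char r (a * (trace g - \<beta>)))"
    by (subst sum.remove[of UNIV 0]) auto
  also have "(\<Sum>g\<in>?S. add_char r (0 * (trace g - \<beta>))) = int (card ?S)" by (simp add: lam_0[OF card2 rpos])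
  also have "(\<Sum>a\<in>UNIV-{0}. \<Sum>g\<in>?S. add_char r (a * (trace g - \<beta>))) =
             (\<Sum>a\<in>UNIV-{0}. add_char r (a * \<beta>) * (\<Sum>g\<in>?S. add_char r (a * trace g)))"
  proof (intro sum.cong refl)
    fix a :: 'a
    have "add_char r (a * (trace g - \<beta>)) = add_char r (a * \<beta>) * add_char r (a * trace g)" for g :: "'a^'n^'n"
    proof -
      have e: "a * (trace g - \<beta>) = a * trace g + (- (a * \<beta>))" by (simp add: algebra_simps)
      have "add_char r (a * (trace g - \<beta>)) = add_char r (a * trace g) * add_char r (- (a * \<beta>))"
        unfolding e by (rule lam_add[OF card2 rpos])
      also have "add_char r (- (a * \<beta>)) = add_char r (a * \<beta>)" by (rule lam_minus[OF card2 rpos])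
      finally show ?thesis by (simp only: mult.commute)
    qed
    thus "(\<Sum>g\<in>?S. add_char r (a * (trace g - \<beta>))) = add_char r (a * \<beta>) * (\<Sum>g\<in>?S. add_char r (a * trace g))"
      by (simp add: sum_distrib_left)
  qed
  also have "\<dots> = (\<Sum>a\<in>UNIV-{0}. add_char r (a * \<beta>) * (int (2^r) ^ (?n choose 2) * kloosterman r (?n - 1) (a ^ ?n)))"
    by (intro sum.cong refl) (simp add: SL_char[OF card2 rpos])
  also have "\<dots> = int (2^r) ^ (?n choose 2) * (\<Sum>a\<in>UNIV-{0}. add_char r (a * \<beta>) * kloosterman r (?n - 1) (a ^ ?n))"
    by (simp add: sum_distrib_left mult_ac)
  also have "\<dots> = int (2^r) ^ (?n choose 2) * (int (2^r) * theta r ?n \<beta> + 1)"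
    unfolding sum_twist_pow theta_def by simp
  finally show ?thesis .
qed


lemma Wa_0: "Wa r (0::'a) = ({} :: ('a^'n^'n) set)"
  by (auto simp: Wa_def lam_0[OF card2 rpos])

lemma moment_core:
  assumes h: "h > 0"
  shows "(\<Sum>i\<le>h. int (h choose i) * (-1)^i * int (2^r) ^ ((CARD('n) choose 2) * i) *
            int (card (SL :: ('a^'n^'n) set)) ^ (h - i) * MK r TYPE('a) (CARD('n) - 1) i) =
         int (2^r) * (\<Sum>i=0..min (card (SL :: ('a^'n^'n) set)) h. (-1)^i * int (card (CS i :: ('a^'n^'n) set set)) *
            (\<Sum>t=i..h. int (fact t) * int (Stirling h t) * 2 ^ (h - t) *
               (if t \<le> card (SL :: ('a^'n^'n) set)
                then int ((card (SL :: ('a^'n^'n) set) - i) choose (card (SL :: ('a^'n^'n) set) - t)) else 0)))"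
proof -
  let ?S = "SL :: ('a^'n^'n) set"
  let ?N = "card ?S"
  let ?q = "int (2^r)"
  let ?C = "CARD('n) choose 2"
  let ?K = "kloosterman r (CARD('n) - 1) :: 'a \<Rightarrow> int"
  let ?w = "\<lambda>a::'a. card (Wa r a :: ('a^'n^'n) set)"
  define L where "L = (\<Sum>a\<in>UNIV. int (2 * ?w a) ^ h)"
  have A: "L = (\<Sum>a\<in>UNIV-{0}. (int ?N - ?q ^ ?C * ?K (a ^ CARD('n))) ^ h)"
  proof -
    have "L = int (2 * ?w 0) ^ h + (\<Sum>a\<in>UNIV-{0}. int (2 * ?w a) ^ h)"
      unfolding L_def by (subst sum.remove[of UNIV 0]) auto
    also have "int (2 * ?w 0) ^ h = 0" using h by (simp add: Wa_0)
    also have "(\<Sum>a\<in>UNIV-{0}. int (2 * ?w a) ^ h) = (\<Sum>a\<in>UNIV-{0}. (int ?N - ?q ^ ?C * ?K (a ^ CARD('n))) ^ h)"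
    proof (intro sum.cong refl)
      fix a :: 'a assume "a \<in> UNIV - {0}"
      hence a: "a \<noteq> 0" by simp
      show "int (2 * ?w a) ^ h = (int ?N - ?q ^ ?C * ?K (a ^ CARD('n))) ^ h"
      proof -
        have "int (2 * ?w a) = int ?N - ?q ^ ?C * ?K (a ^ CARD('n))"
          using two_w[OF card2 rpos, of a, where 'n='n] SL_char[OF card2 rpos a, where 'n='n] by simp
        thus ?thesis by (simp only:)
      qed
    qed
    finally show ?thesis by simp
  qed
  also have "\<dots> = (\<Sum>b\<in>UNIV-{0}. (int ?N - ?q ^ ?C * ?K b) ^ h)"
  proof -
    have pw: "\<And>a::'a. a ^ CARD('n) = a ^ (2^s)" by (simp add: cardn)
    show ?thesis
      using sum.reindex_bij_betw[OF pow2s_bij_nz[OF card2 rpos, of s], of "\<lambda>b. (int ?N - ?q ^ ?C * ?K b) ^ h"]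
      by (simp add: pw)
  qed
  also have "\<dots> = (\<Sum>b\<in>UNIV-{0}. \<Sum>i\<le>h. int (h choose i) * (-1)^i * ?q ^ (?C * i) * int ?N ^ (h - i) * ?K b ^ i)"
  proof (intro sum.cong refl)
    fix b :: 'a
    have "(int ?N - ?q ^ ?C * ?K b) ^ h = ((- (?q ^ ?C * ?K b)) + int ?N) ^ h" by simp
    also have "\<dots> = (\<Sum>i\<le>h. of_nat (h choose i) * (- (?q ^ ?C * ?K b)) ^ i * int ?N ^ (h - i))"
      by (rule binomial_ring)
    also have "\<dots> = (\<Sum>i\<le>h. int (h choose i) * (-1)^i * ?q ^ (?C * i) * int ?N ^ (h - i) * ?K b ^ i)"
    proof (intro sum.cong refl)
      fix i
      have e1: "(- (?q ^ ?C * ?K b)) ^ i = (-1)^i * (?q ^ (?C * i) * ?K b ^ i)"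
        by (simp only: power_minus[of "?q ^ ?C * ?K b"] power_mult_distrib power_mult[symmetric])
      show "of_nat (h choose i) * (- (?q ^ ?C * ?K b)) ^ i * int ?N ^ (h - i) =
            int (h choose i) * (-1)^i * ?q ^ (?C * i) * int ?N ^ (h - i) * ?K b ^ i"
        unfolding e1 by (simp only: of_nat_id mult_ac)
    qed
    finally show "(int ?N - ?q ^ ?C * ?K b) ^ h =
       (\<Sum>i\<le>h. int (h choose i) * (-1)^i * ?q ^ (?C * i) * int ?N ^ (h - i) * ?K b ^ i)" .
  qed
  also have "\<dots> = (\<Sum>i\<le>h. int (h choose i) * (-1)^i * ?q ^ (?C * i) * int ?N ^ (h - i) * MK r TYPE('a) (CARD('n) - 1) i)"
    by (subst sum.swap) (simp add: MK_def sum_distrib_left)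
  finally have L1: "L = (\<Sum>i\<le>h. int (h choose i) * (-1)^i * ?q ^ (?C * i) * int ?N ^ (h - i) * MK r TYPE('a) (CARD('n) - 1) i)" .
  define F where "F = (\<lambda>t. int (fact t) * int (Stirling h t) * 2 ^ (h - t))"
  define G where "G = (\<lambda>i. (-1::int)^i * int (card (CS i :: ('a^'n^'n) set set)))"
  have "L = (\<Sum>a\<in>UNIV. \<Sum>t\<le>h. F t * (int (2^t) * int (?w a choose t)))"
  proof (unfold L_def, intro sum.cong refl)
    fix a :: 'a
    have "int (2 * ?w a) ^ h = 2^h * int (?w a ^ h)" by (simp add: power_mult_distrib)
    also have "\<dots> = 2^h * int (\<Sum>t\<le>h. Stirling h t * (fact t * (?w a choose t)))" by (simp only: stirling_power)
    also have "\<dots> = (\<Sum>t\<le>h. 2^h * (int (Stirling h t) * (int (fact t) * int (?w a choose t))))"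
      by (simp add: sum_distrib_left)
    also have "\<dots> = (\<Sum>t\<le>h. F t * (int (2^t) * int (?w a choose t)))"
    proof (intro sum.cong refl)
      fix t assume "t \<in> {..h}"
      hence "(2::int)^h = 2^(h-t) * 2^t" by (simp add: power_add[symmetric])
      thus "2^h * (int (Stirling h t) * (int (fact t) * int (?w a choose t))) = F t * (int (2^t) * int (?w a choose t))"
        by (simp add: F_def mult_ac)
    qed
    finally show "int (2 * ?w a) ^ h = (\<Sum>t\<le>h. F t * (int (2^t) * int (?w a choose t)))" .
  qed
  also have "\<dots> = (\<Sum>t\<le>h. F t * (\<Sum>a\<in>UNIV. int (2^t) * int (?w a choose t)))"
    by (subst sum.swap) (simp add: sum_distrib_left)
  also have "\<dots> = (\<Sum>t\<le>h. F t * (?q * Bt TYPE('a) t TYPE('n)))"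
    by (simp only: sum_a_choose[OF card2 rpos])
  also have "\<dots> = ?q * (\<Sum>t\<le>h. F t * (\<Sum>i\<in>{0..?N}. G i *
        (if i \<le> t then int ((?N - i) choose (t - i)) else 0)))"
  proof -
    have B: "\<And>t. Bt TYPE('a) t TYPE('n) = (\<Sum>i\<in>{0..?N}. G i * (if i \<le> t then int ((?N - i) choose (t - i)) else 0))"
      by (simp only: Bt_formula[OF card2 rpos] G_def)
    show ?thesis unfolding B by (simp only: sum_distrib_left mult.left_commute)
  qed
  also have "\<dots> = ?q * (\<Sum>i=0..min ?N h. G i * (\<Sum>t=i..h. F t * (if t \<le> ?N then int ((?N - i) choose (?N - t)) else 0)))"
    by (simp only: rearr)
  finally have L2: "L = ?q * (\<Sum>i=0..min ?N h. G i * (\<Sum>t=i..h. F t * (if t \<le> ?N then int ((?N - i) choose (?N - t)) else 0)))" .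
  show ?thesis using trans[OF L1[symmetric] L2] unfolding F_def G_def by (simp only:)
qed

end

lemma final_alg:
  fixes X :: "nat \<Rightarrow> int"
  assumes h: "h > 0" and e: "(\<Sum>i\<le>h. (-1)^i * X i) = Q"
  shows "X h = (\<Sum>i=0..h-1. (-1)^(h+i+1) * X i) + (-1)^h * Q"
proof -
  obtain h' where h': "h = Suc h'" using h by (cases h) auto
  have "(\<Sum>i\<le>h. (-1)^i * X i) = (\<Sum>i<h. (-1)^i * X i) + (-1)^h * X h"
    unfolding h' by (simp add: lessThan_Suc_atMost[symmetric])
  hence "(-1)^h * X h = Q - (\<Sum>i<h. (-1)^i * X i)" using e by simp
  hence "(-1)^h * ((-1)^h * X h) = (-1)^h * Q - (\<Sum>i<h. (-1)^h * ((-1)^i * X i))"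
    by (simp add: right_diff_distrib sum_distrib_left)
  moreover have "(-1::int)^h * ((-1)^h * X h) = X h"
    by (simp add: mult.assoc[symmetric] power_add[symmetric])
  moreover have "(\<Sum>i<h. (-1)^h * ((-1)^i * X i)) = - (\<Sum>i=0..h-1. (-1)^(h+i+1) * X i)"
  proof -
    have "{0..h-1} = {..<h}" using h by auto
    moreover have "(\<Sum>i<h. (-1)^h * ((-1)^i * X i)) = (\<Sum>i<h. - ((-1::int)^(h+i+1) * X i))"
      by (intro sum.cong refl) (simp add: power_add)
    ultimately show ?thesis by (simp only: sum_negf)
  qed
  ultimately show ?thesis by simp
qed

theorem theorem1:
  fixes r s :: nat
  assumes "r > 0" and "s > 0"
    and "CARD('a::{field,finite}) = 2 ^ r"
    and "CARD('n::finite) = 2 ^ s"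
  defines "q \<equiv> CARD('a)"
    and "n \<equiv> CARD('n)"
  defines "N \<equiv> q ^ (n choose 2) * (\<Prod>j=2..n. q ^ j - 1)"
  defines "C \<equiv> weight_dist TYPE('a^'n^'n)"
  defines "nb \<equiv> (\<lambda>\<beta>::'a. card {g \<in> (SL :: ('a^'n^'n) set). trace g = \<beta>})"
  shows "card (SL :: ('a^'n^'n) set) = N
    \<and> (\<forall>h::nat. h > 0 \<longrightarrow>
         int q ^ ((n choose 2) * h) * MK r TYPE('a) (n - 1) h =
           (\<Sum>i=0..h-1. (-1) ^ (h + i + 1) * int (h choose i) * int N ^ (h - i)
                          * int q ^ ((n choose 2) * i) * MK r TYPE('a) (n - 1) i)
         + int q * (\<Sum>i=0..min N h. (-1) ^ (h + i) * int (C i) *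
              (\<Sum>t=i..h. int (fact t) * int (Stirling h t) * 2 ^ (h - t)
                  * (if t \<le> N then int ((N - i) choose (N - t)) else 0))))
    \<and> (\<forall>i\<le>N. C i = (\<Sum>\<nu>\<in>{\<nu>::'a \<Rightarrow> nat. (\<Sum>\<beta>\<in>UNIV. \<nu> \<beta>) = i
                                  \<and> (\<Sum>\<beta>\<in>UNIV. of_nat (\<nu> \<beta>) * \<beta>) = 0}.
                      \<Prod>\<beta>\<in>UNIV. nb \<beta> choose \<nu> \<beta>))
    \<and> (\<forall>\<beta>::'a. int (nb \<beta>) = int q ^ ((n choose 2) - 1) *
           ((\<Prod>j=2..n. int q ^ j - 1) + 1 + int q * theta r n \<beta>))"
proof -
  have card2: "CARD('a) = 2^r" using assms(3) .
  have rpos: "r > 0" using assms(1) .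
  have cardn: "CARD('n) = 2^s" using assms(4) .
  have spos: "s > 0" using assms(2) .
  have qq: "q = 2^r" using card2 q_def by simp
  have nn: "n = CARD('n)" using n_def by simp
  have n2: "n \<ge> 2" using n_ge2[OF card2 rpos cardn spos] nn by simp
  have C1: "(n choose 2) \<ge> 1"
  proof -
    obtain m where "n = Suc (Suc m)" using n2 by (metis add_2_eq_Suc le_Suc_ex)
    thus ?thesis by (simp add: numeral_2_eq_2)
  qed
  have SLeq: "(SL :: ('a^'n^'n) set) = SLI UNIV" by (auto simp: SL_def SLI_def MI_UNIV)
  have cardSL: "card (SL :: ('a^'n^'n) set) = N"
  proof -
    have "card (SLI (UNIV::'n set) :: ('a^'n^'n) set) =
          CARD('a) ^ (card (UNIV::'n set) choose 2) * (\<Prod>j=2..card (UNIV::'n set). CARD('a) ^ j - 1)"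
      by (rule Z_formula) simp
    thus ?thesis unfolding SLeq N_def q_def n_def by simp
  qed
  have intN: "int N = int q ^ (n choose 2) * (\<Prod>j=2..n. int q ^ j - 1)"
  proof -
    have "int (\<Prod>j=2..n. q ^ j - 1) = (\<Prod>j=2..n. int (q ^ j - 1))" by (rule of_nat_prod)
    also have "\<dots> = (\<Prod>j=2..n. int q ^ j - 1)"
    proof (intro prod.cong refl)
      fix j have "q ^ j \<ge> 1" using qq by simp
      thus "int (q ^ j - 1) = int q ^ j - 1" by (simp add: of_nat_diff)
    qed
    finally show ?thesis by (simp add: N_def)
  qed
  have part2: "\<forall>h::nat. h > 0 \<longrightarrow>
         int q ^ ((n choose 2) * h) * MK r TYPE('a) (n - 1) h =
           (\<Sum>i=0..h-1. (-1) ^ (h + i + 1) * int (h choose i) * int N ^ (h - i)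
                          * int q ^ ((n choose 2) * i) * MK r TYPE('a) (n - 1) i)
         + int q * (\<Sum>i=0..min N h. (-1) ^ (h + i) * int (C i) *
              (\<Sum>t=i..h. int (fact t) * int (Stirling h t) * 2 ^ (h - t)
                  * (if t \<le> N then int ((N - i) choose (N - t)) else 0)))"
  proof (intro allI impI)
    fix h :: nat assume h: "h > 0"
    define X where "X = (\<lambda>i. int (h choose i) * int q ^ ((n choose 2) * i) * int N ^ (h - i) * MK r TYPE('a) (n - 1) i)"
    define R where "R = (\<Sum>i=0..min N h. (-1)^i * int (C i) *
              (\<Sum>t=i..h. int (fact t) * int (Stirling h t) * 2 ^ (h - t)
                  * (if t \<le> N then int ((N - i) choose (N - t)) else 0)))"
    have Ci: "C i = card (CS i :: ('a^'n^'n) set set)" for i unfolding C_def by (rule weight_dist_CS)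
    have core: "(\<Sum>i\<le>h. (-1)^i * X i) = int q * R"
    proof -
      have "(\<Sum>i\<le>h. (-1)^i * X i) = (\<Sum>i\<le>h. int (h choose i) * (-1)^i * int (2^r) ^ ((CARD('n) choose 2) * i) *
            int (card (SL :: ('a^'n^'n) set)) ^ (h - i) * MK r TYPE('a) (CARD('n) - 1) i)"
        by (intro sum.cong refl) (simp add: X_def qq nn cardSL mult_ac)
      also have "\<dots> = int (2^r) * (\<Sum>i=0..min (card (SL :: ('a^'n^'n) set)) h. (-1)^i * int (card (CS i :: ('a^'n^'n) set set)) *
            (\<Sum>t=i..h. int (fact t) * int (Stirling h t) * 2 ^ (h - t) *
               (if t \<le> card (SL :: ('a^'n^'n) set)
                then int ((card (SL :: ('a^'n^'n) set) - i) choose (card (SL :: ('a^'n^'n) set) - t)) else 0)))"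
        by (rule moment_core[OF card2 rpos cardn spos h])
      also have "\<dots> = int q * R" unfolding cardSL by (simp add: R_def Ci qq)
      finally show ?thesis .
    qed
    have "X h = (\<Sum>i=0..h-1. (-1)^(h+i+1) * X i) + (-1)^h * (int q * R)"
      by (rule final_alg[OF h core])
    moreover have "X h = int q ^ ((n choose 2) * h) * MK r TYPE('a) (n - 1) h" by (simp add: X_def)
    moreover have "(\<Sum>i=0..h-1. (-1)^(h+i+1) * X i) = (\<Sum>i=0..h-1. (-1) ^ (h + i + 1) * int (h choose i) * int N ^ (h - i)
                          * int q ^ ((n choose 2) * i) * MK r TYPE('a) (n - 1) i)"
      by (intro sum.cong refl) (simp add: X_def mult_ac)
    moreover have "(-1)^h * (int q * R) = int q * (\<Sum>i=0..min N h. (-1) ^ (h + i) * int (C i) *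
              (\<Sum>t=i..h. int (fact t) * int (Stirling h t) * 2 ^ (h - t)
                  * (if t \<le> N then int ((N - i) choose (N - t)) else 0)))"
      by (simp add: R_def sum_distrib_left power_add mult_ac)
    ultimately show "int q ^ ((n choose 2) * h) * MK r TYPE('a) (n - 1) h =
           (\<Sum>i=0..h-1. (-1) ^ (h + i + 1) * int (h choose i) * int N ^ (h - i)
                          * int q ^ ((n choose 2) * i) * MK r TYPE('a) (n - 1) i)
         + int q * (\<Sum>i=0..min N h. (-1) ^ (h + i) * int (C i) *
              (\<Sum>t=i..h. int (fact t) * int (Stirling h t) * 2 ^ (h - t)
                  * (if t \<le> N then int ((N - i) choose (N - t)) else 0)))" by simp
  qed
  have part3: "\<forall>i\<le>N. C i = (\<Sum>\<nu>\<in>{\<nu>::'a \<Rightarrow> nat. (\<Sum>\<beta>\<in>UNIV. \<nu> \<beta>) = i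
                                  \<and> (\<Sum>\<beta>\<in>UNIV. of_nat (\<nu> \<beta>) * \<beta>) = 0}.
                      \<Prod>\<beta>\<in>UNIV. nb \<beta> choose \<nu> \<beta>)"
  proof (intro allI impI)
    fix i
    have "C i = card (CS i :: ('a^'n^'n) set set)" unfolding C_def by (rule weight_dist_CS)
    also have "\<dots> = (\<Sum>\<nu>\<in>Nu i. \<Prod>\<beta>\<in>UNIV. card {g \<in> (SL :: ('a^'n^'n) set). trace g = \<beta>} choose \<nu> \<beta>)"
      by (rule CS_formula)
    finally show "C i = (\<Sum>\<nu>\<in>{\<nu>::'a \<Rightarrow> nat. (\<Sum>\<beta>\<in>UNIV. \<nu> \<beta>) = i
                                  \<and> (\<Sum>\<beta>\<in>UNIV. of_nat (\<nu> \<beta>) * \<beta>) = 0}.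
                      \<Prod>\<beta>\<in>UNIV. nb \<beta> choose \<nu> \<beta>)" by (simp add: Nu_def nb_def)
  qed
  have part4: "\<forall>\<beta>::'a. int (nb \<beta>) = int q ^ ((n choose 2) - 1) *
           ((\<Prod>j=2..n. int q ^ j - 1) + 1 + int q * theta r n \<beta>)"
  proof
    fix \<beta> :: 'a
    let ?P = "(\<Prod>j=2..n. int q ^ j - 1)"
    have "int (nb \<beta>) * int q = int N + int q ^ (n choose 2) * (int q * theta r n \<beta> + 1)"
      using nb_mult[OF card2 rpos cardn spos, of \<beta>] by (simp add: nb_def cardSL qq nn)
    also have "\<dots> = int q ^ (n choose 2) * (?P + 1 + int q * theta r n \<beta>)" by (simp add: intN algebra_simps)
    also have "int q ^ (n choose 2) = int q ^ ((n choose 2) - 1) * int q"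
    proof -
      obtain c where c: "n choose 2 = Suc c" using C1 by (cases "n choose 2") auto
      show ?thesis by (simp add: c)
    qed
    finally have "int (nb \<beta>) * int q = int q ^ ((n choose 2) - 1) * (?P + 1 + int q * theta r n \<beta>) * int q"
      by (simp add: mult_ac)
    moreover have "int q \<noteq> 0" using qq by simp
    ultimately show "int (nb \<beta>) = int q ^ ((n choose 2) - 1) * (?P + 1 + int q * theta r n \<beta>)" by simp
  qed
  show ?thesis using cardSL part2 part3 part4 by blast
qed

end
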